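(* Under the standing setup (C1)–(C4), there is a constant $\tilde C>0$ such that whenever $N\ge n>m\ge[N^{1-\gamma}]\ge n_0$, $$E\Big(\sum_{k=m+1}^nR(k)\Big)^4\le\tilde C(n-m)^2,\qquad R(k)=\prod_{j=1}^\ell X_j(q_j(k))-\prod_{j=1}^\ell a_j .$$
   Context: Standing setup. $(\Omega,\mathcal F,P)$ is a probability space, $\ell\ge1$, $X_1,\dots,X_\ell$ are real stationary processes $X_j(n)$, $n\ge0$, with $|X_j(n)|\le D$ a.s. $\{\mathcal F_{kl}\}$ is a family of sub-$\sigma$-algebras, $\mathcal F_{kl}\subset\mathcal F_{k'l'}$ for $k'\le k$, $l'\ge l$. $\alpha(n)=\sup_{k\ge0}\sup_{A\in\mathcal F_{-\infty,k},B\in\mathcal F_{k+n,\infty}}|P(A\cap B)-P(A)P(B)|$, $\beta_j(n)=\sup_{m\ge0}E|X_j(m)-E(X_j(m)\mid\mathcal F_{m-n,m+n})|$. (C1): $\alpha(n)+\max_j\beta_j(n)\le\kappa^{-1}e^{-\kappa n}$ for some $\kappa>0$ and all $n$. (C2): $q_1(n)=rn+p$ with integers $r>0,p\ge0$. There exist $\gamma\in(0,1)$, $n_0>1$ such that for $n\ge n_0$: (C3) $q_j(n+1)\ge q_j(n)+n^\gamma$ for $j=2,\dots,\ell$; (C4) $q_{j+1}([n^{1-\gamma}])\ge q_j(n)n^\gamma$ for $j=1,\dots,\ell-1$. All $q_j$ take nonnegative integer values on nonnegative integers. $a_j=EX_j(0)$. *)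

theory Defs
  imports "HOL-Probability.Probability"
begin

definition ext_int_idx :: "ereal set" where
  "ext_int_idx = {-\<infinity>, \<infinity>} \<union> range (\<lambda>z::int. ereal (real_of_int z))"

definition alpha_mix :: "'a measure \<Rightarrow> (ereal \<Rightarrow> ereal \<Rightarrow> 'a measure) \<Rightarrow> nat \<Rightarrow> real" where
  "alpha_mix M F n = Sup {\<bar>measure M (A \<inter> B) - measure M A * measure M B\<bar> | k A B.
      (k::int) \<ge> 0 \<and> A \<in> sets (F (-\<infinity>) (ereal (real_of_int k)))
      \<and> B \<in> sets (F (ereal (real_of_int (k + int n))) \<infinity>)}"

definition beta_approx :: "'a measure \<Rightarrow> (ereal \<Rightarrow> ereal \<Rightarrow> 'a measure) \<Rightarrow> (nat \<Rightarrow> 'a \<Rightarrow> real) \<Rightarrow> nat \<Rightarrow> real" where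
  "beta_approx M F Y n = Sup {prob_space.expectation M (\<lambda>\<omega>. \<bar>Y m \<omega> -
      real_cond_exp M (F (ereal (real_of_int (int m - int n))) (ereal (real_of_int (int m + int n)))) (Y m) \<omega>\<bar>)
      | m. True}"

definition stationary_proc :: "'a measure \<Rightarrow> (nat \<Rightarrow> 'a \<Rightarrow> real) \<Rightarrow> bool" where
  "stationary_proc M Y \<longleftrightarrow> (\<forall>n. Y n \<in> borel_measurable M) \<and>
     (\<forall>k. distr M (Pi\<^sub>M UNIV (\<lambda>_. borel)) (\<lambda>\<omega> n. Y (n + k) \<omega>)
        = distr M (Pi\<^sub>M UNIV (\<lambda>_. borel)) (\<lambda>\<omega> n. Y n \<omega>))"

end

theory Submission
  imports Defs
begin

lemma mix_cov:
  fixes M G H :: "'a measure" and f h :: "'a \<Rightarrow> real"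
  assumes P: "prob_space M" and sG: "subalgebra M G" and sH: "subalgebra M H"
    and mix: "\<And>A B. A \<in> sets G \<Longrightarrow> B \<in> sets H \<Longrightarrow> \<bar>measure M (A \<inter> B) - measure M A * measure M B\<bar> \<le> a"
    and fm: "f \<in> borel_measurable G" and hm: "h \<in> borel_measurable H"
    and fb: "AE x in M. \<bar>f x\<bar> \<le> b1" and hb: "AE x in M. \<bar>h x\<bar> \<le> b2"
    and b1: "b1 \<ge> 0" and b2: "b2 \<ge> 0"
  shows "\<bar>(\<integral>x. f x * h x \<partial>M) - (\<integral>x. f x \<partial>M) * (\<integral>x. h x \<partial>M)\<bar> \<le> 4 * b1 * b2 * a"
proof -
  interpret prob_space M by (rule P)
  interpret G: sigma_finite_subalgebra M G
    by (rule finite_measure_subalgebra_is_sigma_finite) (simp add: finite_measure_subalgebra_def finite_measure_subalgebra_axioms_def sG finite_measure_axioms)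
  interpret H: sigma_finite_subalgebra M H
    by (rule finite_measure_subalgebra_is_sigma_finite) (simp add: finite_measure_subalgebra_def finite_measure_subalgebra_axioms_def sH finite_measure_axioms)
  have fM[measurable]: "f \<in> borel_measurable M" by (rule measurable_from_subalg[OF sG fm])
  have hM[measurable]: "h \<in> borel_measurable M" by (rule measurable_from_subalg[OF sH hm])
  have fi: "integrable M f" by (rule integrable_const_bound[where B=b1]) (use fb in auto)
  have hi: "integrable M h" by (rule integrable_const_bound[where B=b2]) (use hb in auto)
  have fhi: "integrable M (\<lambda>x. f x * h x)"
  proof (rule integrable_const_bound[where B="b1*b2"])
    show "AE x in M. norm (f x * h x) \<le> b1 * b2"
      using fb hb by eventually_elim (auto simp: abs_mult intro: mult_mono)
  qed simp
  define Eh where "Eh = (\<integral>x. h x \<partial>M)"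
  define ch where "ch = real_cond_exp M G h"
  have chG[measurable]: "ch \<in> borel_measurable G" unfolding ch_def by simp
  have chM[measurable]: "ch \<in> borel_measurable M" by (rule measurable_from_subalg[OF sG chG])
  have chi: "integrable M ch" unfolding ch_def using hi by auto
  have step1: "(\<integral>x. f x * h x \<partial>M) = (\<integral>x. f x * ch x \<partial>M)"
    unfolding ch_def using G.real_cond_exp_intg(2)[OF fhi fm hM] by simp
  have fchi: "integrable M (\<lambda>x. f x * ch x)"
    unfolding ch_def using G.real_cond_exp_intg(1)[OF fhi fm hM] by simp
  have "(\<integral>x. f x * h x \<partial>M) - (\<integral>x. f x \<partial>M) * Eh = (\<integral>x. f x * (ch x - Eh) \<partial>M)"
    using step1 fchi fi by (simp add: right_diff_distrib)
  also have "\<bar>\<dots>\<bar> \<le> (\<integral>x. b1 * \<bar>ch x - Eh\<bar> \<partial>M)"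
    apply (rule order_trans[OF integral_abs_bound])
    apply (rule integral_mono_AE)
    using fchi fi chi apply (auto intro!: integrable_abs simp: right_diff_distrib)[2]
    using fb by eventually_elim (auto simp: abs_mult intro: mult_right_mono)
  finally have c1: "\<bar>(\<integral>x. f x * h x \<partial>M) - (\<integral>x. f x \<partial>M) * Eh\<bar> \<le> b1 * (\<integral>x. \<bar>ch x - Eh\<bar> \<partial>M)"
    by simp
  have spG: "space G = space M" and spH: "space H = space M" using sG sH by (auto simp: subalgebra_def)
  define A1 where "A1 = {x\<in>space M. Eh < ch x}"
  define A2 where "A2 = {x\<in>space M. ch x < Eh}"
  have A1G: "A1 \<in> sets G" unfolding A1_def spG[symmetric] by measurable
  have A2G: "A2 \<in> sets G" unfolding A2_def spG[symmetric] by measurable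
  define \<xi> where "\<xi> = (\<lambda>x. indicator A1 x - indicator A2 x :: real)"
  have \<xi>G[measurable]: "\<xi> \<in> borel_measurable G" unfolding \<xi>_def using A1G A2G by measurable
  have \<xi>M[measurable]: "\<xi> \<in> borel_measurable M" by (rule measurable_from_subalg[OF sG \<xi>G])
  have \<xi>b: "\<bar>\<xi> x\<bar> \<le> 1" for x unfolding \<xi>_def A1_def A2_def by (auto simp: indicator_def)
  have \<xi>i: "integrable M \<xi>" by (rule integrable_const_bound[where B=1]) (use \<xi>b in auto)
  have \<xi>hi: "integrable M (\<lambda>x. \<xi> x * h x)"
  proof (rule integrable_const_bound[where B="b2"])
    show "AE x in M. norm (\<xi> x * h x) \<le> b2"
      using hb by eventually_elim (use \<xi>b in \<open>auto simp: abs_mult intro: mult_le_one order_trans[OF mult_right_mono[of _ 1]]\<close>)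
  qed simp
  have \<xi>chi: "integrable M (\<lambda>x. \<xi> x * ch x)"
    unfolding ch_def using G.real_cond_exp_intg(1)[OF \<xi>hi \<xi>G hM] by simp
  have "(\<integral>x. \<bar>ch x - Eh\<bar> \<partial>M) = (\<integral>x. \<xi> x * ch x - \<xi> x * Eh \<partial>M)"
    by (rule Bochner_Integration.integral_cong[OF refl]) (auto simp: \<xi>_def A1_def A2_def indicator_def)
  also have "\<dots> = (\<integral>x. \<xi> x * ch x \<partial>M) - (\<integral>x. \<xi> x \<partial>M) * Eh"
    using \<xi>chi \<xi>i by simp
  also have "(\<integral>x. \<xi> x * ch x \<partial>M) = (\<integral>x. \<xi> x * h x \<partial>M)"
    unfolding ch_def using G.real_cond_exp_intg(2)[OF \<xi>hi \<xi>G hM] by simp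
  finally have e2: "(\<integral>x. \<bar>ch x - Eh\<bar> \<partial>M) = (\<integral>x. h x * \<xi> x \<partial>M) - Eh * (\<integral>x. \<xi> x \<partial>M)"
    by (simp add: mult.commute)
  define E\<xi> where "E\<xi> = (\<integral>x. \<xi> x \<partial>M)"
  define c\<xi> where "c\<xi> = real_cond_exp M H \<xi>"
  have c\<xi>H[measurable]: "c\<xi> \<in> borel_measurable H" unfolding c\<xi>_def by simp
  have c\<xi>M[measurable]: "c\<xi> \<in> borel_measurable M" by (rule measurable_from_subalg[OF sH c\<xi>H])
  have c\<xi>i: "integrable M c\<xi>" unfolding c\<xi>_def using \<xi>i by auto
  have Ec\<xi>: "(\<integral>x. c\<xi> x \<partial>M) = E\<xi>" unfolding c\<xi>_def E\<xi>_def using \<xi>i by auto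
  have h\<xi>i: "integrable M (\<lambda>x. h x * \<xi> x)" using \<xi>hi by (simp add: mult.commute)
  have hc\<xi>i: "integrable M (\<lambda>x. h x * c\<xi> x)"
    unfolding c\<xi>_def using H.real_cond_exp_intg(1)[OF h\<xi>i hm \<xi>M] by simp
  have "(\<integral>x. h x * \<xi> x \<partial>M) - Eh * E\<xi> = (\<integral>x. h x * (c\<xi> x - E\<xi>) \<partial>M)"
    using H.real_cond_exp_intg(2)[OF h\<xi>i hm \<xi>M] hc\<xi>i hi unfolding c\<xi>_def Eh_def
    by (simp add: right_diff_distrib)
  also have "\<bar>\<dots>\<bar> \<le> (\<integral>x. b2 * \<bar>c\<xi> x - E\<xi>\<bar> \<partial>M)"
    apply (rule order_trans[OF integral_abs_bound])
    apply (rule integral_mono_AE)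
    using hc\<xi>i hi c\<xi>i apply (auto intro!: integrable_abs simp: right_diff_distrib)[2]
    using hb by eventually_elim (auto simp: abs_mult intro: mult_right_mono)
  finally have c2: "\<bar>(\<integral>x. h x * \<xi> x \<partial>M) - Eh * E\<xi>\<bar> \<le> b2 * (\<integral>x. \<bar>c\<xi> x - E\<xi>\<bar> \<partial>M)"
    by simp
  define B1 where "B1 = {x\<in>space M. E\<xi> < c\<xi> x}"
  define B2 where "B2 = {x\<in>space M. c\<xi> x < E\<xi>}"
  have B1H: "B1 \<in> sets H" unfolding B1_def spH[symmetric] by measurable
  have B2H: "B2 \<in> sets H" unfolding B2_def spH[symmetric] by measurable
  define \<eta> where "\<eta> = (\<lambda>x. indicator B1 x - indicator B2 x :: real)"
  have \<eta>H[measurable]: "\<eta> \<in> borel_measurable H" unfolding \<eta>_def using B1H B2H by measurable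
  have \<eta>M[measurable]: "\<eta> \<in> borel_measurable M" by (rule measurable_from_subalg[OF sH \<eta>H])
  have \<eta>b: "\<bar>\<eta> x\<bar> \<le> 1" for x unfolding \<eta>_def B1_def B2_def by (auto simp: indicator_def)
  have \<eta>i: "integrable M \<eta>" by (rule integrable_const_bound[where B=1]) (use \<eta>b in auto)
  have \<eta>\<xi>i: "integrable M (\<lambda>x. \<eta> x * \<xi> x)"
  proof (rule integrable_const_bound[where B=1])
    show "AE x in M. norm (\<eta> x * \<xi> x) \<le> 1"
      by (rule AE_I2) (use \<eta>b \<xi>b in \<open>auto simp: abs_mult intro: mult_le_one\<close>)
  qed simp
  have \<eta>c\<xi>i: "integrable M (\<lambda>x. \<eta> x * c\<xi> x)"
    unfolding c\<xi>_def using H.real_cond_exp_intg(1)[OF \<eta>\<xi>i \<eta>H \<xi>M] by simp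
  have "(\<integral>x. \<bar>c\<xi> x - E\<xi>\<bar> \<partial>M) = (\<integral>x. \<eta> x * c\<xi> x - \<eta> x * E\<xi> \<partial>M)"
    by (rule Bochner_Integration.integral_cong[OF refl]) (auto simp: \<eta>_def B1_def B2_def indicator_def)
  also have "\<dots> = (\<integral>x. \<eta> x * c\<xi> x \<partial>M) - (\<integral>x. \<eta> x \<partial>M) * E\<xi>"
    using \<eta>c\<xi>i \<eta>i by simp
  also have "(\<integral>x. \<eta> x * c\<xi> x \<partial>M) = (\<integral>x. \<eta> x * \<xi> x \<partial>M)"
    unfolding c\<xi>_def using H.real_cond_exp_intg(2)[OF \<eta>\<xi>i \<eta>H \<xi>M] by simp
  finally have e3: "(\<integral>x. \<bar>c\<xi> x - E\<xi>\<bar> \<partial>M) = (\<integral>x. \<eta> x * \<xi> x \<partial>M) - (\<integral>x. \<eta> x \<partial>M) * (\<integral>x. \<xi> x \<partial>M)"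
    by (simp add: E\<xi>_def)
  have sM: "A1 \<in> sets M" "A2 \<in> sets M" "B1 \<in> sets M" "B2 \<in> sets M"
    using A1G A2G B1H B2H sG sH by (auto simp: subalgebra_def)
  have ind: "(\<integral>x. (indicator A x * indicator B x :: real) \<partial>M) = measure M (A \<inter> B)" if "A \<in> sets M" "B \<in> sets M" for A B
  proof -
    have "(\<integral>x. (indicator A x * indicator B x :: real) \<partial>M) = (\<integral>x. indicator (A \<inter> B) x \<partial>M)"
      by (simp add: indicator_inter_arith)
    also have "\<dots> = measure M (A \<inter> B)" using that sets.sets_into_space by (simp add: Int_absorb2 inf.coboundedI1)
    finally show ?thesis .
  qed
  have ind1: "(\<integral>x. (indicator A x :: real) \<partial>M) = measure M A" if "A \<in> sets M" for A :: "'a set"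
    using that sets.sets_into_space by (simp add: Int_absorb2)
  have ii: "integrable M (\<lambda>x. indicator A x * indicator B x :: real)" if "A \<in> sets M" "B \<in> sets M" for A B
    using that by (simp add: indicator_inter_arith[symmetric] integrable_real_indicator Int emeasure_eq_measure)
  have ep: "(\<integral>x. \<eta> x * \<xi> x \<partial>M) = measure M (B1 \<inter> A1) - measure M (B1 \<inter> A2) - measure M (B2 \<inter> A1) + measure M (B2 \<inter> A2)"
  proof -
    have "(\<integral>x. \<eta> x * \<xi> x \<partial>M) = (\<integral>x. indicator B1 x * indicator A1 x - indicator B1 x * indicator A2 x
        - indicator B2 x * indicator A1 x + indicator B2 x * indicator A2 x \<partial>M)"
      unfolding \<eta>_def \<xi>_def by (simp add: algebra_simps)
    also have "\<dots> = measure M (B1 \<inter> A1) - measure M (B1 \<inter> A2) - measure M (B2 \<inter> A1) + measure M (B2 \<inter> A2)"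
      using sM by (simp add: ii ind)
    finally show ?thesis .
  qed
  have ee: "(\<integral>x. \<eta> x \<partial>M) = measure M B1 - measure M B2" "(\<integral>x. \<xi> x \<partial>M) = measure M A1 - measure M A2"
    unfolding \<eta>_def \<xi>_def using sM by (auto simp: ind1 integrable_real_indicator emeasure_eq_measure)
  have "(\<integral>x. \<bar>c\<xi> x - E\<xi>\<bar> \<partial>M) =
      (measure M (A1 \<inter> B1) - measure M A1 * measure M B1) - (measure M (A2 \<inter> B1) - measure M A2 * measure M B1)
    - (measure M (A1 \<inter> B2) - measure M A1 * measure M B2) + (measure M (A2 \<inter> B2) - measure M A2 * measure M B2)"
    unfolding e3 ep ee by (simp add: algebra_simps Int_commute)
  also have "\<dots> \<le> 4 * a"
    using mix[OF A1G B1H] mix[OF A2G B1H] mix[OF A1G B2H] mix[OF A2G B2H] by linarith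
  finally have c3: "(\<integral>x. \<bar>c\<xi> x - E\<xi>\<bar> \<partial>M) \<le> 4 * a" .
  have "(\<integral>x. \<bar>ch x - Eh\<bar> \<partial>M) \<le> b2 * (4 * a)"
    using e2 c2 c3 b2 unfolding E\<xi>_def by (smt (verit) mult_left_mono)
  then have "b1 * (\<integral>x. \<bar>ch x - Eh\<bar> \<partial>M) \<le> b1 * (b2 * (4 * a))" using b1 by (rule mult_left_mono)
  then show ?thesis using c1 unfolding Eh_def by (simp add: mult_ac)
qed

locale setting =
  fixes M :: "'a measure" and L :: nat and X :: "nat \<Rightarrow> nat \<Rightarrow> 'a \<Rightarrow> real" and D :: real
    and F :: "ereal \<Rightarrow> ereal \<Rightarrow> 'a measure" and \<kappa> :: real
  assumes P: "prob_space M"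
    and l: "L \<ge> 1"
    and stat: "\<And>j. j \<in> {1..L} \<Longrightarrow> stationary_proc M (X j)"
    and bdd: "\<And>j n. j \<in> {1..L} \<Longrightarrow> AE \<omega> in M. \<bar>X j n \<omega>\<bar> \<le> D"
    and subalg: "\<And>k l. k \<in> ext_int_idx \<Longrightarrow> l \<in> ext_int_idx \<Longrightarrow> k \<le> l \<Longrightarrow> subalgebra M (F k l)"
    and mono: "\<And>k l k' l'. k \<in> ext_int_idx \<Longrightarrow> l \<in> ext_int_idx \<Longrightarrow> k' \<in> ext_int_idx \<Longrightarrow> l' \<in> ext_int_idx
        \<Longrightarrow> k \<le> l \<Longrightarrow> k' \<le> k \<Longrightarrow> l \<le> l' \<Longrightarrow> sets (F k l) \<subseteq> sets (F k' l')"
    and kpos: "\<kappa> > 0"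
    and C1: "\<And>n. alpha_mix M F n + (MAX j\<in>{1..L}. beta_approx M F (X j) n) \<le> (1 / \<kappa>) * exp (- \<kappa> * real n)"
begin

interpretation prob_space M by (rule P)

definition a :: "nat \<Rightarrow> real" where "a j = expectation (X j 0)"
definition Dp :: real where "Dp = \<bar>D\<bar> + 1"
definition BB :: real where "BB = 2 * Dp"
definition eps :: "nat \<Rightarrow> real" where "eps n = (1 / \<kappa>) * exp (- \<kappa> * real n)"
definition CE :: "nat \<Rightarrow> nat \<Rightarrow> nat \<Rightarrow> 'a \<Rightarrow> real" where
  "CE j t s = real_cond_exp M (F (ereal (real_of_int (int t - int s))) (ereal (real_of_int (int t + int s)))) (X j t)"
definition win :: "nat \<Rightarrow> nat \<Rightarrow> 'a measure" where
  "win t s = F (ereal (real_of_int (int t - int s))) (ereal (real_of_int (int t + int s)))"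
fun vF :: "nat \<times> nat \<times> real \<Rightarrow> 'a \<Rightarrow> real" where "vF (j,t,c) \<omega> = X j t \<omega> - c"
fun vY :: "nat \<Rightarrow> nat \<times> nat \<times> real \<Rightarrow> 'a \<Rightarrow> real" where "vY s (j,t,c) \<omega> = CE j t s \<omega> - c"
definition PL :: "(nat \<times> nat \<times> real) list \<Rightarrow> 'a \<Rightarrow> real" where
  "PL fs \<omega> = prod_list (map (\<lambda>f. vF f \<omega>) fs)"
definition PY :: "nat \<Rightarrow> (nat \<times> nat \<times> real) list \<Rightarrow> 'a \<Rightarrow> real" where
  "PY s fs \<omega> = prod_list (map (\<lambda>f. vY s f \<omega>) fs)"
definition good :: "(nat \<times> nat \<times> real) list \<Rightarrow> bool" where
  "good fs \<longleftrightarrow> list_all (\<lambda>(j,t,c). j \<in> {1..L} \<and> \<bar>c\<bar> \<le> D) fs"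

lemma BB_ge1: "BB \<ge> 1" unfolding BB_def Dp_def by simp
lemma Dp_ge: "D \<le> Dp" "\<bar>D\<bar> \<le> Dp" unfolding Dp_def by auto

lemma idx_int[simp]: "ereal (real_of_int z) \<in> ext_int_idx"
  unfolding ext_int_idx_def by auto
lemma idx_inf[simp]: "\<infinity> \<in> ext_int_idx" "-\<infinity> \<in> ext_int_idx"
  unfolding ext_int_idx_def by auto

lemma Xm[measurable]: "j \<in> {1..L} \<Longrightarrow> X j t \<in> borel_measurable M"
  using stat unfolding stationary_proc_def by blast

lemma D_nonneg: "D \<ge> 0"
proof -
  have "AE \<omega> in M. \<bar>X 1 0 \<omega>\<bar> \<le> D" using bdd[of 1 0] l by auto
  then have "AE \<omega> in M. 0 \<le> D" by eventually_elim auto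
  then show ?thesis by simp
qed

lemma Xi: "j \<in> {1..L} \<Longrightarrow> integrable M (X j t)"
  by (rule integrable_const_bound[where B=D]) (use bdd in auto)

lemma mean: assumes j: "j \<in> {1..L}" shows "expectation (X j t) = a j"
proof -
  let ?P = "Pi\<^sub>M UNIV (\<lambda>_::nat. borel :: real measure)"
  have eq: "distr M ?P (\<lambda>\<omega> n. X j (n + t) \<omega>) = distr M ?P (\<lambda>\<omega> n. X j n \<omega>)"
    using stat[OF j] unfolding stationary_proc_def by blast
  have m1: "(\<lambda>\<omega> n. X j (n + t) \<omega>) \<in> measurable M ?P"
    by (rule measurable_PiM_single') (use j in auto)
  have m2: "(\<lambda>\<omega> n. X j n \<omega>) \<in> measurable M ?P"
    by (rule measurable_PiM_single') (use j in auto)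
  have "expectation (X j t) = integral\<^sup>L (distr M ?P (\<lambda>\<omega> n. X j (n + t) \<omega>)) (\<lambda>x. x 0)"
    by (subst integral_distr[OF m1]) auto
  also have "\<dots> = integral\<^sup>L (distr M ?P (\<lambda>\<omega> n. X j n \<omega>)) (\<lambda>x. x 0)" by (simp only: eq)
  also have "\<dots> = a j" unfolding a_def by (subst integral_distr[OF m2]) auto
  finally show ?thesis .
qed

lemma a_bound: assumes j: "j \<in> {1..L}" shows "\<bar>a j\<bar> \<le> D"
proof -
  have "\<bar>a j\<bar> \<le> expectation (\<lambda>\<omega>. \<bar>X j 0 \<omega>\<bar>)" unfolding a_def by (rule integral_abs_bound)
  also have "\<dots> \<le> expectation (\<lambda>\<omega>. D)"
    by (rule integral_mono_AE) (use bdd[OF j] Xi[OF j] in auto)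
  finally show ?thesis by (simp add: prob_space)
qed

lemma win_sub: "subalgebra M (win t s)"
  unfolding win_def by (rule subalg[OF idx_int idx_int]) simp

lemma win_sf: "sigma_finite_subalgebra M (win t s)"
  by (rule finite_measure_subalgebra_is_sigma_finite)
     (simp add: finite_measure_subalgebra_def finite_measure_subalgebra_axioms_def win_sub finite_measure_axioms)

lemma CE_win: "CE j t s = real_cond_exp M (win t s) (X j t)"
  unfolding CE_def win_def ..

lemma CE_mw: "CE j t s \<in> borel_measurable (win t s)"
  unfolding CE_win by simp

lemma CE_m[measurable]: "CE j t s \<in> borel_measurable M"
  by (rule measurable_from_subalg[OF win_sub CE_mw])

lemma CE_bound: assumes j: "j \<in> {1..L}" shows "AE \<omega> in M. \<bar>CE j t s \<omega>\<bar> \<le> D"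
proof -
  interpret W: sigma_finite_subalgebra M "win t s" by (rule win_sf)
  have "AE \<omega> in M. CE j t s \<omega> \<le> D" unfolding CE_win
    by (rule W.real_cond_exp_le_c[OF Xi[OF j]]) (use bdd[OF j, of t] in auto)
  moreover have "AE \<omega> in M. CE j t s \<omega> \<ge> -D" unfolding CE_win
    by (rule W.real_cond_exp_ge_c[OF Xi[OF j]]) (use bdd[OF j, of t] in auto)
  ultimately show ?thesis by eventually_elim auto
qed

lemma alpha_set_bdd: "bdd_above {\<bar>measure M (A \<inter> B) - measure M A * measure M B\<bar> | k A B.
      (k::int) \<ge> 0 \<and> A \<in> sets (F (-\<infinity>) (ereal (real_of_int k)))
      \<and> B \<in> sets (F (ereal (real_of_int (k + int n))) \<infinity>)}"
proof (rule bdd_aboveI[where M=1], clarify)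
  fix k A B
  have "0 \<le> measure M (A \<inter> B)" "measure M (A \<inter> B) \<le> 1" "0 \<le> measure M A" "measure M A \<le> 1"
    "0 \<le> measure M B" "measure M B \<le> 1" by auto
  then have "0 \<le> measure M A * measure M B" "measure M A * measure M B \<le> 1"
    by (auto intro: mult_le_one)
  then show "\<bar>measure M (A \<inter> B) - measure M A * measure M B\<bar> \<le> 1"
    using \<open>0 \<le> measure M (A \<inter> B)\<close> \<open>measure M (A \<inter> B) \<le> 1\<close> by linarith
qed

lemma alpha_ge: assumes "A \<in> sets (F (-\<infinity>) (ereal (real_of_int (int k))))"
    "B \<in> sets (F (ereal (real_of_int (int k + int n))) \<infinity>)"
  shows "\<bar>measure M (A \<inter> B) - measure M A * measure M B\<bar> \<le> alpha_mix M F n"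
  unfolding alpha_mix_def
  apply (rule cSup_upper[OF _ alpha_set_bdd])
  apply (rule CollectI)
  apply (rule exI[of _ "int k"], rule exI[of _ A], rule exI[of _ B])
  using assms by simp

lemma alpha_nonneg: "0 \<le> alpha_mix M F n"
  using alpha_ge[of "{}" 0 "{}" n] by simp

lemma beta_ge: assumes j: "j \<in> {1..L}"
  shows "expectation (\<lambda>\<omega>. \<bar>X j t \<omega> - CE j t s \<omega>\<bar>) \<le> beta_approx M F (X j) s"
proof -
  have bd: "expectation (\<lambda>\<omega>. \<bar>X j m \<omega> - CE j m s \<omega>\<bar>) \<le> 2 * D" for m
  proof -
    have "expectation (\<lambda>\<omega>. \<bar>X j m \<omega> - CE j m s \<omega>\<bar>) \<le> expectation (\<lambda>\<omega>. 2 * D)"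
      by (rule integral_mono_AE') (use bdd[OF j, of m] CE_bound[OF j, of m s] D_nonneg in \<open>auto elim: AE_mp\<close>)
    then show ?thesis by (simp add: prob_space)
  qed
  have eq: "{expectation (\<lambda>\<omega>. \<bar>X j m \<omega> - real_cond_exp M (F (ereal (real_of_int (int m - int s)))
        (ereal (real_of_int (int m + int s)))) (X j m) \<omega>\<bar>) | m. True}
      = range (\<lambda>m. expectation (\<lambda>\<omega>. \<bar>X j m \<omega> - CE j m s \<omega>\<bar>))"
    unfolding CE_def by blast
  show ?thesis unfolding beta_approx_def eq
    by (rule cSup_upper[OF rangeI]) (rule bdd_aboveI2[where M="2*D"], rule bd)
qed

lemma alpha_eps: "alpha_mix M F n \<le> eps n" and beta_eps: "j \<in> {1..L} \<Longrightarrow> beta_approx M F (X j) n \<le> eps n"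
proof -
  have b0: "0 \<le> beta_approx M F (X j) n" if "j \<in> {1..L}" for j
    by (rule order_trans[OF _ beta_ge[OF that, of 0 n]]) (rule integral_nonneg_AE, simp)
  have ne: "{1..L} \<noteq> {}" using l by auto
  have "0 \<le> (MAX j\<in>{1..L}. beta_approx M F (X j) n)"
    using b0 l by (intro order_trans[OF b0[of 1]] Max_ge) auto
  then show "alpha_mix M F n \<le> eps n" using C1[of n] unfolding eps_def by linarith
  assume j: "j \<in> {1..L}"
  have "beta_approx M F (X j) n \<le> (MAX j\<in>{1..L}. beta_approx M F (X j) n)"
    using j by (intro Max_ge) auto
  then show "beta_approx M F (X j) n \<le> eps n" using C1[of n] alpha_nonneg[of n] unfolding eps_def by linarith
qed

lemma XCE: "j \<in> {1..L} \<Longrightarrow> expectation (\<lambda>\<omega>. \<bar>X j t \<omega> - CE j t s \<omega>\<bar>) \<le> eps s"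
  using beta_ge beta_eps order_trans by blast

lemma eps_mono: "m \<le> n \<Longrightarrow> eps n \<le> eps m"
  unfolding eps_def using kpos by (auto simp: divide_right_mono mult_left_mono)

lemma eps_nonneg: "0 \<le> eps n" unfolding eps_def using kpos by simp

lemma intb: "(f::'a\<Rightarrow>real) \<in> borel_measurable M \<Longrightarrow> AE x in M. \<bar>f x\<bar> \<le> c \<Longrightarrow> integrable M f"
  by (rule integrable_const_bound[where B=c]) auto

lemma PL_simps[simp]: "PL [] \<omega> = 1" "PL (f#fs) \<omega> = vF f \<omega> * PL fs \<omega>" "PL (fs@gs) \<omega> = PL fs \<omega> * PL gs \<omega>"
  unfolding PL_def by auto
lemma PY_simps[simp]: "PY s [] \<omega> = 1" "PY s (f#fs) \<omega> = vY s f \<omega> * PY s fs \<omega>" "PY s (fs@gs) \<omega> = PY s fs \<omega> * PY s gs \<omega>"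
  unfolding PY_def by auto

lemma good_simps[simp]: "good []" "good (fs@gs) \<longleftrightarrow> good fs \<and> good gs"
  unfolding good_def by auto
lemma good_Cons: "good (f#fs) \<longleftrightarrow> good [f] \<and> good fs"
  unfolding good_def by auto

lemma good1: "good [(j,t,c::real)] \<longleftrightarrow> j \<in> {1..L} \<and> \<bar>c\<bar> \<le> D"
  unfolding good_def by auto

lemma vF_eq: "vF (j,t,c) = (\<lambda>\<omega>. X j t \<omega> - c)" by (rule ext) simp
lemma vY_eq: "vY s (j,t,c) = (\<lambda>\<omega>. CE j t s \<omega> - c)" by (rule ext) simp
lemma vF_m: assumes "good [f]" shows "vF f \<in> borel_measurable M"
proof (cases f)
  case (fields j t c)
  then have j: "j \<in> {1..L}" using assms by (simp add: good1)
  show ?thesis unfolding fields vF_eq using Xm[OF j, of t] by (rule borel_measurable_diff) simp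
qed
lemma vY_m: "vY s f \<in> borel_measurable M"
proof (cases f)
  case (fields j t c)
  show ?thesis unfolding fields vY_eq using CE_m[of j t s] by (rule borel_measurable_diff) simp
qed
lemma vF_b: "good [f] \<Longrightarrow> AE \<omega> in M. \<bar>vF f \<omega>\<bar> \<le> BB"
proof (cases f)
  case (fields j t c)
  assume g: "good [f]"
  then have j: "j \<in> {1..L}" and c: "\<bar>c\<bar> \<le> D" using fields by (auto simp: good1)
  show ?thesis using bdd[OF j, of t] unfolding fields
    by eventually_elim (use c Dp_ge in \<open>auto simp: BB_def\<close>)
qed
lemma vY_b: "good [f] \<Longrightarrow> AE \<omega> in M. \<bar>vY s f \<omega>\<bar> \<le> BB"
proof (cases f)
  case (fields j t c)
  assume g: "good [f]"
  then have j: "j \<in> {1..L}" and c: "\<bar>c\<bar> \<le> D" using fields by (auto simp: good1)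
  show ?thesis using CE_bound[OF j, of t s] unfolding fields
    by eventually_elim (use c Dp_ge in \<open>auto simp: BB_def\<close>)
qed
lemma vFY: "good [f] \<Longrightarrow> expectation (\<lambda>\<omega>. \<bar>vF f \<omega> - vY s f \<omega>\<bar>) \<le> eps s"
  by (cases f) (auto simp: good1 intro: XCE)


end

context setting begin
interpretation prob_space M by (rule P)

lemma PL_props:
  assumes "good fs"
  shows "PL fs \<in> borel_measurable M \<and> (AE \<omega> in M. \<bar>PL fs \<omega>\<bar> \<le> BB ^ length fs)
    \<and> PY s fs \<in> borel_measurable M \<and> (AE \<omega> in M. \<bar>PY s fs \<omega>\<bar> \<le> BB ^ length fs)
    \<and> expectation (\<lambda>\<omega>. \<bar>PL fs \<omega> - PY s fs \<omega>\<bar>) \<le> length fs * BB ^ length fs * eps s"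
  using assms
proof (induction fs)
  case Nil
  have e: "PL [] = (\<lambda>_. 1)" "PY s [] = (\<lambda>_. 1)" by (auto simp: fun_eq_iff)
  show ?case by (intro conjI) (simp_all add: e)
next
  case (Cons f fs)
  have gf: "good [f]" and gfs: "good fs" using Cons.prems good_Cons[of f fs] by blast+
  from Cons.IH[OF gfs] have m1: "PL fs \<in> borel_measurable M" and b1: "AE \<omega> in M. \<bar>PL fs \<omega>\<bar> \<le> BB ^ length fs"
    and m2: "PY s fs \<in> borel_measurable M" and b2: "AE \<omega> in M. \<bar>PY s fs \<omega>\<bar> \<le> BB ^ length fs"
    and e: "expectation (\<lambda>\<omega>. \<bar>PL fs \<omega> - PY s fs \<omega>\<bar>) \<le> length fs * BB ^ length fs * eps s" by auto
  let ?n = "length fs"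
  have BB0: "0 \<le> BB" using BB_ge1 by simp
  have mF: "vF f \<in> borel_measurable M" by (rule vF_m[OF gf])
  have mY: "vY s f \<in> borel_measurable M" by (rule vY_m)
  have m1': "PL (f#fs) \<in> borel_measurable M"
  proof -
    have "PL (f#fs) = (\<lambda>\<omega>. vF f \<omega> * PL fs \<omega>)" by (auto simp: fun_eq_iff)
    then show ?thesis using mF m1 by simp
  qed
  have m2': "PY s (f#fs) \<in> borel_measurable M"
  proof -
    have "PY s (f#fs) = (\<lambda>\<omega>. vY s f \<omega> * PY s fs \<omega>)" by (auto simp: fun_eq_iff)
    then show ?thesis using mY m2 by simp
  qed
  have b1': "AE \<omega> in M. \<bar>PL (f#fs) \<omega>\<bar> \<le> BB ^ length (f#fs)"
    using b1 vF_b[OF gf] by eventually_elim (simp add: abs_mult mult_mono[OF _ _ BB0])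
  have b2': "AE \<omega> in M. \<bar>PY s (f#fs) \<omega>\<bar> \<le> BB ^ length (f#fs)"
    using b2 vY_b[OF gf, of s] by eventually_elim (simp add: abs_mult mult_mono[OF _ _ BB0])
  have i1: "integrable M (\<lambda>\<omega>. \<bar>vF f \<omega> - vY s f \<omega>\<bar>)"
    by (rule intb[where c="2*BB"]) (use mF mY in simp, use vF_b[OF gf] vY_b[OF gf, of s] in \<open>eventually_elim, simp\<close>)
  have i2: "integrable M (\<lambda>\<omega>. \<bar>PL fs \<omega> - PY s fs \<omega>\<bar>)"
    by (rule intb[where c="2*BB^?n"]) (use m1 m2 in simp, use b1 b2 in \<open>eventually_elim, simp\<close>)
  have "expectation (\<lambda>\<omega>. \<bar>PL (f#fs) \<omega> - PY s (f#fs) \<omega>\<bar>)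
      \<le> expectation (\<lambda>\<omega>. BB ^ ?n * \<bar>vF f \<omega> - vY s f \<omega>\<bar> + BB * \<bar>PL fs \<omega> - PY s fs \<omega>\<bar>)"
  proof (rule integral_mono_AE')
    show "integrable M (\<lambda>\<omega>. BB ^ ?n * \<bar>vF f \<omega> - vY s f \<omega>\<bar> + BB * \<bar>PL fs \<omega> - PY s fs \<omega>\<bar>)"
      using i1 i2 by auto
    show "AE \<omega> in M. 0 \<le> BB ^ ?n * \<bar>vF f \<omega> - vY s f \<omega>\<bar> + BB * \<bar>PL fs \<omega> - PY s fs \<omega>\<bar>"
      using BB0 by auto
    show "AE \<omega> in M. \<bar>PL (f#fs) \<omega> - PY s (f#fs) \<omega>\<bar> \<le> BB ^ ?n * \<bar>vF f \<omega> - vY s f \<omega>\<bar> + BB * \<bar>PL fs \<omega> - PY s fs \<omega>\<bar>"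
      using b1 vY_b[OF gf, of s]
    proof eventually_elim
      case (elim \<omega>)
      have "\<bar>PL (f#fs) \<omega> - PY s (f#fs) \<omega>\<bar> = \<bar>(vF f \<omega> - vY s f \<omega>) * PL fs \<omega> + vY s f \<omega> * (PL fs \<omega> - PY s fs \<omega>)\<bar>"
        by (simp add: algebra_simps)
      also have "\<dots> \<le> \<bar>vF f \<omega> - vY s f \<omega>\<bar> * \<bar>PL fs \<omega>\<bar> + \<bar>vY s f \<omega>\<bar> * \<bar>PL fs \<omega> - PY s fs \<omega>\<bar>"
        by (metis abs_mult abs_triangle_ineq)
      also have "\<dots> \<le> \<bar>vF f \<omega> - vY s f \<omega>\<bar> * BB ^ ?n + BB * \<bar>PL fs \<omega> - PY s fs \<omega>\<bar>"
        using elim by (intro add_mono mult_mono) auto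
      finally show ?case by (simp add: mult.commute)
    qed
  qed
  also have "\<dots> = BB ^ ?n * expectation (\<lambda>\<omega>. \<bar>vF f \<omega> - vY s f \<omega>\<bar>) + BB * expectation (\<lambda>\<omega>. \<bar>PL fs \<omega> - PY s fs \<omega>\<bar>)"
    using i1 i2 by simp
  also have "\<dots> \<le> BB ^ ?n * eps s + BB * (?n * BB ^ ?n * eps s)"
    using vFY[OF gf, of s] e BB0 by (intro add_mono mult_left_mono) auto
  also have "\<dots> \<le> length (f#fs) * BB ^ length (f#fs) * eps s"
  proof -
    have "BB ^ ?n \<le> BB ^ Suc ?n" using BB_ge1 by (simp add: power_increasing)
    then have "BB ^ ?n * eps s \<le> BB ^ Suc ?n * eps s" using eps_nonneg by (rule mult_right_mono)
    then show ?thesis by (simp add: algebra_simps)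
  qed
  finally have E: "expectation (\<lambda>\<omega>. \<bar>PL (f#fs) \<omega> - PY s (f#fs) \<omega>\<bar>) \<le> length (f#fs) * BB ^ length (f#fs) * eps s" .
  show ?case using m1' m2' b1' b2' E by blast
qed

lemma idx_nat[simp]: "ereal (real n) \<in> ext_int_idx" "ereal (real x + real y) \<in> ext_int_idx"
    "ereal (real x - real y) \<in> ext_int_idx" "ereal (real x + real y - real z) \<in> ext_int_idx"
  using idx_int[of "int n"] idx_int[of "int x + int y"] idx_int[of "int x - int y"]
    idx_int[of "int x + int y - int z"] by simp_all

lemma PLm: "good fs \<Longrightarrow> PL fs \<in> borel_measurable M" using PL_props by blast
lemma PLb: "good fs \<Longrightarrow> AE \<omega> in M. \<bar>PL fs \<omega>\<bar> \<le> BB ^ length fs" using PL_props by blast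
lemma PYm: "good fs \<Longrightarrow> PY s fs \<in> borel_measurable M" using PL_props by blast
lemma PYb: "good fs \<Longrightarrow> AE \<omega> in M. \<bar>PY s fs \<omega>\<bar> \<le> BB ^ length fs" using PL_props by blast
lemma PLY: "good fs \<Longrightarrow> expectation (\<lambda>\<omega>. \<bar>PL fs \<omega> - PY s fs \<omega>\<bar>) \<le> length fs * BB ^ length fs * eps s"
  using PL_props by blast

lemma absE: "(f::'a\<Rightarrow>real) \<in> borel_measurable M \<Longrightarrow> AE x in M. \<bar>f x\<bar> \<le> c \<Longrightarrow> \<bar>expectation f\<bar> \<le> c"
proof -
  assume m: "f \<in> borel_measurable M" and b: "AE x in M. \<bar>f x\<bar> \<le> c"
  have "\<bar>expectation f\<bar> \<le> expectation (\<lambda>x. \<bar>f x\<bar>)" by (rule integral_abs_bound)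
  also have "\<dots> \<le> expectation (\<lambda>x. c)"
  proof (rule integral_mono_AE')
    show "AE x in M. 0 \<le> c" using b by eventually_elim auto
  qed (use b in auto)
  finally show ?thesis by (simp add: prob_space)
qed

lemma diffE: "integrable M (f::'a\<Rightarrow>real) \<Longrightarrow> integrable M g \<Longrightarrow> \<bar>expectation f - expectation g\<bar> \<le> expectation (\<lambda>x. \<bar>f x - g x\<bar>)"
proof -
  assume "integrable M f" "integrable M g"
  then have "expectation f - expectation g = expectation (\<lambda>x. f x - g x)" by simp
  then show ?thesis using integral_abs_bound by metis
qed

lemma PY_G:
  assumes sG: "space G = space M" and h: "list_all (\<lambda>(j,t,c). sets (win t s) \<subseteq> sets G) fs"
  shows "PY s fs \<in> borel_measurable G"
  using h
proof (induction fs)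
  case Nil
  have e: "PY s [] = (\<lambda>_. 1)" by (auto simp: fun_eq_iff)
  show ?case unfolding e by simp
next
  case (Cons f fs)
  obtain j t c where f: "f = (j,t,c)" by (cases f)
  have sub: "sets (win t s) \<subseteq> sets G" and r: "list_all (\<lambda>(j,t,c). sets (win t s) \<subseteq> sets G) fs"
    using Cons.prems f by auto
  have "subalgebra G (win t s)" using sub win_sub sG by (auto simp: subalgebra_def)
  then have "CE j t s \<in> borel_measurable G" by (rule measurable_from_subalg) (rule CE_mw)
  then have m1: "vY s f \<in> borel_measurable G" unfolding f vY_eq by (rule borel_measurable_diff) simp
  have e: "PY s (f#fs) = (\<lambda>\<omega>. vY s f \<omega> * PY s fs \<omega>)" by (auto simp: fun_eq_iff)
  show ?case unfolding e using m1 Cons.IH[OF r] by (rule borel_measurable_times)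
qed

lemma cov_lists:
  assumes gf: "good fs" and gg: "good gs"
    and tf: "list_all (\<lambda>(j,t,c). t \<le> T0) fs" and tg: "list_all (\<lambda>(j,t,c). T0 + d \<le> t) gs"
  shows "\<bar>expectation (\<lambda>\<omega>. PL fs \<omega> * PL gs \<omega>) - expectation (PL fs) * expectation (PL gs)\<bar>
    \<le> (2 * (length fs + length gs) + 4) * BB ^ (length fs + length gs) * eps (d div 3)"
proof -
  define s where "s = d div 3"
  define g where "g = d - 2 * s"
  define k where "k = T0 + s"
  have gs_: "s \<le> g" "2 * s \<le> d" unfolding g_def s_def by auto
  define G where "G = F (-\<infinity>) (ereal (real_of_int (int k)))"
  define H where "H = F (ereal (real_of_int (int k + int g))) \<infinity>"
  have sG: "subalgebra M G" unfolding G_def by (rule subalg) auto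
  have sH: "subalgebra M H" unfolding H_def by (rule subalg) auto
  have spG: "space G = space M" and spH: "space H = space M" using sG sH by (auto simp: subalgebra_def)
  have wf: "list_all (\<lambda>(j,t,c). sets (win t s) \<subseteq> sets G) fs"
    unfolding list_all_iff
  proof (rule ballI)
    fix x assume x: "x \<in> set fs"
    obtain j t c where xe: "x = (j,t,c)" by (cases x)
    have "t \<le> T0" using tf tg x xe by (auto simp: list_all_iff)
    then show "case x of (j,t,c) \<Rightarrow> sets (win t s) \<subseteq> sets G" unfolding xe prod.case win_def G_def k_def
      by (intro mono) simp_all
  qed
  have wg: "list_all (\<lambda>(j,t,c). sets (win t s) \<subseteq> sets H) gs"
    unfolding list_all_iff
  proof (rule ballI)
    fix x assume x: "x \<in> set gs"
    obtain j t c where xe: "x = (j,t,c)" by (cases x)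
    have "T0 + d \<le> t" using tf tg x xe by (auto simp: list_all_iff)
    then show "case x of (j,t,c) \<Rightarrow> sets (win t s) \<subseteq> sets H" unfolding xe prod.case win_def H_def k_def g_def
      using gs_ by (intro mono) (simp_all add: of_nat_diff)
  qed
  have mfG: "PY s fs \<in> borel_measurable G" by (rule PY_G[OF spG wf])
  have mgH: "PY s gs \<in> borel_measurable H" by (rule PY_G[OF spH wg])
  let ?nf = "length fs" and ?ng = "length gs"
  have BB0: "0 \<le> BB" using BB_ge1 by simp
  have mix: "\<bar>expectation (\<lambda>\<omega>. PY s fs \<omega> * PY s gs \<omega>) - expectation (PY s fs) * expectation (PY s gs)\<bar>
      \<le> 4 * BB ^ ?nf * BB ^ ?ng * alpha_mix M F g"
    by (rule mix_cov[OF P sG sH _ mfG mgH PYb[OF gf] PYb[OF gg]])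
       (auto simp: G_def H_def BB0 intro: alpha_ge)
  have "alpha_mix M F g \<le> eps s" using alpha_eps[of g] eps_mono[OF gs_(1)] by linarith
  then have mix': "\<bar>expectation (\<lambda>\<omega>. PY s fs \<omega> * PY s gs \<omega>) - expectation (PY s fs) * expectation (PY s gs)\<bar>
      \<le> 4 * BB ^ (?nf + ?ng) * eps s"
  proof -
    have "4 * BB ^ ?nf * BB ^ ?ng * alpha_mix M F g \<le> 4 * BB ^ ?nf * BB ^ ?ng * eps s"
      using \<open>alpha_mix M F g \<le> eps s\<close> BB0 by (intro mult_left_mono) auto
    then show ?thesis using mix by (simp add: power_add mult.assoc)
  qed
  have gfg: "good (fs @ gs)" using gf gg by simp
  have eq1: "(\<lambda>\<omega>. PL fs \<omega> * PL gs \<omega>) = PL (fs@gs)" "(\<lambda>\<omega>. PY s fs \<omega> * PY s gs \<omega>) = PY s (fs@gs)"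
    by (auto simp: fun_eq_iff)
  have i1: "integrable M (PL (fs@gs))" by (rule intb[OF PLm[OF gfg] PLb[OF gfg]])
  have i2: "integrable M (PY s (fs@gs))" by (rule intb[OF PYm[OF gfg] PYb[OF gfg]])
  have a: "\<bar>expectation (PL (fs@gs)) - expectation (PY s (fs@gs))\<bar> \<le> (?nf + ?ng) * BB ^ (?nf + ?ng) * eps s"
    using order_trans[OF diffE[OF i1 i2] PLY[OF gfg, of s]] by simp
  have if1: "integrable M (PL fs)" by (rule intb[OF PLm[OF gf] PLb[OF gf]])
  have if2: "integrable M (PY s fs)" by (rule intb[OF PYm[OF gf] PYb[OF gf]])
  have ig1: "integrable M (PL gs)" by (rule intb[OF PLm[OF gg] PLb[OF gg]])
  have ig2: "integrable M (PY s gs)" by (rule intb[OF PYm[OF gg] PYb[OF gg]])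
  have df: "\<bar>expectation (PL fs) - expectation (PY s fs)\<bar> \<le> ?nf * BB ^ ?nf * eps s"
    using order_trans[OF diffE[OF if1 if2] PLY[OF gf, of s]] .
  have dg: "\<bar>expectation (PL gs) - expectation (PY s gs)\<bar> \<le> ?ng * BB ^ ?ng * eps s"
    using order_trans[OF diffE[OF ig1 ig2] PLY[OF gg, of s]] .
  have bf: "\<bar>expectation (PL fs)\<bar> \<le> BB ^ ?nf" by (rule absE[OF PLm[OF gf] PLb[OF gf]])
  have bg: "\<bar>expectation (PY s gs)\<bar> \<le> BB ^ ?ng" by (rule absE[OF PYm[OF gg] PYb[OF gg]])
  have c: "\<bar>expectation (PL fs) * expectation (PL gs) - expectation (PY s fs) * expectation (PY s gs)\<bar>
      \<le> (?nf + ?ng) * BB ^ (?nf + ?ng) * eps s"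
  proof -
    have "\<bar>expectation (PL fs) * expectation (PL gs) - expectation (PY s fs) * expectation (PY s gs)\<bar>
      = \<bar>expectation (PL fs) * (expectation (PL gs) - expectation (PY s gs)) + (expectation (PL fs) - expectation (PY s fs)) * expectation (PY s gs)\<bar>"
      by (simp add: algebra_simps)
    also have "\<dots> \<le> \<bar>expectation (PL fs)\<bar> * \<bar>expectation (PL gs) - expectation (PY s gs)\<bar> + \<bar>expectation (PL fs) - expectation (PY s fs)\<bar> * \<bar>expectation (PY s gs)\<bar>"
      by (metis abs_mult abs_triangle_ineq)
    also have "\<dots> \<le> BB ^ ?nf * (?ng * BB ^ ?ng * eps s) + (?nf * BB ^ ?nf * eps s) * BB ^ ?ng"
      using bf bg df dg by (intro add_mono mult_mono) (auto simp: eps_nonneg BB0)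
    also have "\<dots> = (?nf + ?ng) * BB ^ (?nf + ?ng) * eps s" by (simp add: algebra_simps power_add)
    finally show ?thesis .
  qed
  have "\<bar>expectation (\<lambda>\<omega>. PL fs \<omega> * PL gs \<omega>) - expectation (PL fs) * expectation (PL gs)\<bar>
     \<le> (?nf + ?ng) * BB ^ (?nf + ?ng) * eps s + 4 * BB ^ (?nf + ?ng) * eps s + (?nf + ?ng) * BB ^ (?nf + ?ng) * eps s"
    using a c mix' unfolding eq1 by linarith
  also have "\<dots> = (2 * (?nf + ?ng) + 4) * BB ^ (?nf + ?ng) * eps (d div 3)"
    unfolding s_def by (simp add: algebra_simps)
  finally show ?thesis .
qed

end

context setting begin
interpretation prob_space M by (rule P)

definition NN :: nat where "NN = 4 * (L + 1)"
definition K1 :: real where "K1 = (2 * NN + 4) * BB ^ NN"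

lemma K1_mono: "n \<le> NN \<Longrightarrow> real (2 * n + 4) * BB ^ n \<le> K1"
  unfolding K1_def using BB_ge1
  by (intro mult_mono) (auto intro: power_increasing)

lemma K1_nonneg: "0 \<le> K1" unfolding K1_def using BB_ge1 by simp

lemma covK:
  assumes "good fs" "good gs" "list_all (\<lambda>(j,t,c). t \<le> T0) fs" "list_all (\<lambda>(j,t,c). T0 + d \<le> t) gs"
    "length fs + length gs \<le> NN"
  shows "\<bar>expectation (\<lambda>\<omega>. PL fs \<omega> * PL gs \<omega>) - expectation (PL fs) * expectation (PL gs)\<bar> \<le> K1 * eps (d div 3)"
  using cov_lists[OF assms(1-4)] mult_right_mono[OF K1_mono[OF assms(5)] eps_nonneg[of "d div 3"]]
  by linarith

lemma mean0: "i \<in> {1..L} \<Longrightarrow> expectation (PL [(i, t, a i)]) = 0"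
proof -
  assume i: "i \<in> {1..L}"
  have "PL [(i, t, a i)] = (\<lambda>\<omega>. X i t \<omega> - a i)" by (auto simp: fun_eq_iff)
  then show ?thesis using mean[OF i, of t] Xi[OF i, of t] by (simp add: prob_space)
qed

end

locale fourth = setting +
  fixes i :: nat and tt :: "nat \<Rightarrow> nat" and hs :: "nat \<Rightarrow> (nat \<times> nat \<times> real) list" and u v :: nat
  assumes i: "i \<in> {1..L}"
    and hs_good: "\<And>k. k \<in> {u..v} \<Longrightarrow> good (hs k)"
    and hs_len: "\<And>k. k \<in> {u..v} \<Longrightarrow> length (hs k) \<le> L"
    and tt_mono: "\<And>k k'. k \<in> {u..v} \<Longrightarrow> k' \<in> {u..v} \<Longrightarrow> k \<le> k' \<Longrightarrow> tt k + (k' - k) \<le> tt k'"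
    and hs_high: "\<And>k k'. k \<in> {u..v} \<Longrightarrow> k' \<in> {u..v} \<Longrightarrow> list_all (\<lambda>(j,t,c). tt k \<le> t) (hs k')"
begin

interpretation prob_space M by (rule P)

definition fk :: "nat \<Rightarrow> nat \<times> nat \<times> real" where "fk k = (i, tt k, a i)"
definition Zl :: "nat \<Rightarrow> (nat \<times> nat \<times> real) list" where "Zl k = fk k # hs k"

lemma fk_good: "good [fk k]" unfolding fk_def using i a_bound[OF i] by (simp add: good1)
lemma Zl_good: "k \<in> {u..v} \<Longrightarrow> good (Zl k)" unfolding Zl_def using fk_good hs_good good_Cons by blast
lemma Zl_len: "k \<in> {u..v} \<Longrightarrow> length (Zl k) \<le> L + 1" unfolding Zl_def using hs_len by simp

lemma tt_le: "k \<in> {u..v} \<Longrightarrow> k' \<in> {u..v} \<Longrightarrow> k \<le> k' \<Longrightarrow> tt k \<le> tt k'"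
  using tt_mono by fastforce

lemma Zl_high: "k \<in> {u..v} \<Longrightarrow> k' \<in> {u..v} \<Longrightarrow> k \<le> k' \<Longrightarrow> list_all (\<lambda>(j,t,c). tt k \<le> t) (Zl k')"
  unfolding Zl_def fk_def using hs_high tt_le by auto

lemma la_mono: fixes xs :: "(nat \<times> nat \<times> real) list" and T T' :: nat
  assumes h: "list_all (\<lambda>(j,t,c). T \<le> t) xs" and TT: "T' \<le> T"
  shows "list_all (\<lambda>(j,t,c). T' \<le> t) xs"
  unfolding list_all_iff
proof (rule ballI)
  fix x assume x: "x \<in> set xs"
  obtain j t c where xe: "x = (j,t,c)" by (cases x)
  have "T \<le> t" using h x xe by (auto simp: list_all_iff)
  then show "case x of (j,t,c) \<Rightarrow> T' \<le> t" using TT xe by simp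
qed

definition W :: "nat \<Rightarrow> nat \<Rightarrow> nat \<Rightarrow> nat \<Rightarrow> 'a \<Rightarrow> real" where
  "W k1 k2 k3 k4 \<omega> = PL (Zl k1) \<omega> * PL (Zl k2) \<omega> * PL (Zl k3) \<omega> * PL (Zl k4) \<omega>"

lemma split1:
  assumes k: "k \<in> {u..v}" and g: "good rest" and t: "list_all (\<lambda>(j,t,c). tt k + d \<le> t) rest"
    and len: "length rest + 1 \<le> NN"
  shows "\<bar>expectation (\<lambda>\<omega>. PL [fk k] \<omega> * PL rest \<omega>)\<bar> \<le> K1 * eps (d div 3)"
proof -
  have "\<bar>expectation (\<lambda>\<omega>. PL [fk k] \<omega> * PL rest \<omega>) - expectation (PL [fk k]) * expectation (PL rest)\<bar> \<le> K1 * eps (d div 3)"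
    by (rule covK[OF fk_good g _ t]) (use len in \<open>auto simp: fk_def\<close>)
  moreover have "expectation (PL [fk k]) = 0" unfolding fk_def by (rule mean0[OF i])
  ultimately show ?thesis by simp
qed

lemma B1:
  assumes k: "k1 \<in> {u..v}" "k2 \<in> {u..v}" "k3 \<in> {u..v}" "k4 \<in> {u..v}" and o: "k1 \<le> k2" "k2 \<le> k3" "k3 \<le> k4"
  shows "\<bar>expectation (W k1 k2 k3 k4)\<bar> \<le> K1 * eps ((k2 - k1) div 3)"
proof -
  let ?rest = "hs k1 @ Zl k2 @ Zl k3 @ Zl k4"
  have e: "W k1 k2 k3 k4 = (\<lambda>\<omega>. PL [fk k1] \<omega> * PL ?rest \<omega>)"
    by (auto simp: fun_eq_iff W_def Zl_def mult_ac)
  have T: "tt k1 + (k2 - k1) \<le> tt k2" using tt_mono k o by blast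
  have "list_all (\<lambda>(j,t,c). tt k2 \<le> t) ?rest"
    using hs_high[OF k(2) k(1)] Zl_high[OF k(2) k(2)] Zl_high[OF k(2) k(3)] Zl_high[OF k(2) k(4)] o by auto
  then have t: "list_all (\<lambda>(j,t,c). tt k1 + (k2 - k1) \<le> t) ?rest" using T by (rule la_mono)
  have g: "good ?rest" using hs_good k Zl_good by simp
  have len: "length ?rest + 1 \<le> NN" using Zl_len[OF k(2)] Zl_len[OF k(3)] Zl_len[OF k(4)] hs_len[OF k(1)]
    unfolding NN_def by simp
  show ?thesis unfolding e by (rule split1[OF k(1) g t len])
qed

lemma B2:
  assumes k: "k1 \<in> {u..v}" "k2 \<in> {u..v}" "k3 \<in> {u..v}" "k4 \<in> {u..v}" and o: "k1 \<le> k2" "k2 \<le> k3" "k3 \<le> k4"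
  shows "\<bar>expectation (W k1 k2 k3 k4)\<bar> \<le> K1 * eps ((k3 - k2) div 3) + BB^2 * (K1 * eps ((k4 - k3) div 3))"
proof -
  let ?past = "[fk k1, fk k2]"
  let ?fut = "hs k1 @ hs k2 @ Zl k3 @ Zl k4"
  let ?rest = "hs k1 @ hs k2 @ hs k3 @ Zl k4"
  have e: "W k1 k2 k3 k4 = (\<lambda>\<omega>. PL ?past \<omega> * PL ?fut \<omega>)"
    by (auto simp: fun_eq_iff W_def Zl_def mult_ac)
  have e2: "PL ?fut = (\<lambda>\<omega>. PL [fk k3] \<omega> * PL ?rest \<omega>)"
    by (auto simp: fun_eq_iff Zl_def mult_ac)
  have gp: "good ?past" using fk_good good_Cons by blast
  have gf: "good ?fut" using hs_good k Zl_good by simp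
  have gr: "good ?rest" using hs_good k Zl_good by simp
  have tp: "list_all (\<lambda>(j,t,c). t \<le> tt k2) ?past" using tt_le k o by (auto simp: fk_def)
  have T: "tt k2 + (k3 - k2) \<le> tt k3" using tt_mono k o by blast
  have "list_all (\<lambda>(j,t,c). tt k3 \<le> t) ?fut"
    using hs_high[OF k(3) k(1)] hs_high[OF k(3) k(2)] Zl_high[OF k(3) k(3)] Zl_high[OF k(3) k(4)] o by auto
  then have tf: "list_all (\<lambda>(j,t,c). tt k2 + (k3 - k2) \<le> t) ?fut" using T by (rule la_mono)
  have T': "tt k3 + (k4 - k3) \<le> tt k4" using tt_mono k o by blast
  have "list_all (\<lambda>(j,t,c). tt k4 \<le> t) ?rest"
    using hs_high[OF k(4) k(1)] hs_high[OF k(4) k(2)] hs_high[OF k(4) k(3)] Zl_high[OF k(4) k(4)] o by auto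
  then have tr: "list_all (\<lambda>(j,t,c). tt k3 + (k4 - k3) \<le> t) ?rest" using T' by (rule la_mono)
  have lens: "length (Zl k3) \<le> L + 1" "length (Zl k4) \<le> L + 1" "length (hs k1) \<le> L" "length (hs k2) \<le> L"
    "length (hs k3) \<le> L"
    using Zl_len k hs_len by auto
  have len1: "length ?past + length ?fut \<le> NN" using lens unfolding NN_def by simp
  have len2: "length ?rest + 1 \<le> NN" using lens unfolding NN_def by simp
  have c: "\<bar>expectation (W k1 k2 k3 k4) - expectation (PL ?past) * expectation (PL ?fut)\<bar> \<le> K1 * eps ((k3 - k2) div 3)"
    unfolding e by (rule covK[OF gp gf tp tf len1])
  have bp0: "\<bar>expectation (PL ?past)\<bar> \<le> BB ^ length ?past" by (rule absE[OF PLm[OF gp] PLb[OF gp]])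
  have bp: "\<bar>expectation (PL ?past)\<bar> \<le> BB ^ 2" using bp0 by (simp add: power2_eq_square del: PL_simps)
  have bf: "\<bar>expectation (PL ?fut)\<bar> \<le> K1 * eps ((k4 - k3) div 3)"
    unfolding e2 by (rule split1[OF k(3) gr tr len2])
  have "\<bar>expectation (PL ?past) * expectation (PL ?fut)\<bar> \<le> BB^2 * (K1 * eps ((k4 - k3) div 3))"
    unfolding abs_mult using bp bf by (intro mult_mono) auto
  then show ?thesis using c by linarith
qed

end

abbreviation lsts :: "'b set \<Rightarrow> nat \<Rightarrow> 'b list set" where
  "lsts K n \<equiv> {xs. set xs \<subseteq> K \<and> length xs = n}"

lemma lists_Suc_sum:
  fixes G :: "'b list \<Rightarrow> real"
  assumes fK: "finite K"
  shows "(\<Sum>xs\<in>lsts K (Suc n). G xs) = (\<Sum>x\<in>K. \<Sum>xs\<in>lsts K n. G (x#xs))"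
proof -
  have inj: "inj_on (\<lambda>(xs, x). x#xs) (lsts K n \<times> K)" by (auto simp: inj_on_def)
  have "(\<Sum>xs\<in>lsts K (Suc n). G xs) = (\<Sum>xs\<in>(\<lambda>(xs, x). x#xs) ` (lsts K n \<times> K). G xs)"
    by (simp only: lists_length_Suc_eq)
  also have "\<dots> = (\<Sum>(xs,x)\<in>lsts K n \<times> K. G (x#xs))"
    by (subst sum.reindex[OF inj]) (simp add: case_prod_beta')
  also have "\<dots> = (\<Sum>xs\<in>lsts K n. \<Sum>x\<in>K. G (x#xs))"
    by (rule sum.cartesian_product[symmetric])
  also have "\<dots> = (\<Sum>x\<in>K. \<Sum>xs\<in>lsts K n. G (x#xs))"
    by (rule sum.swap)
  finally show ?thesis .
qed

lemma lists_0: "lsts K 0 = {[]}" by (rule set_eqI) auto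

lemma power_sum_lists:
  fixes f :: "'b \<Rightarrow> real"
  assumes fK: "finite K"
  shows "(\<Sum>k\<in>K. f k) ^ n = (\<Sum>xs\<in>lsts K n. prod_list (map f xs))"
proof (induction n)
  case 0
  show ?case unfolding lists_0 by simp
next
  case (Suc n)
  have "(\<Sum>k\<in>K. f k) ^ Suc n = (\<Sum>k\<in>K. f k) * (\<Sum>xs\<in>lsts K n. prod_list (map f xs))"
    using Suc by simp
  also have "\<dots> = (\<Sum>x\<in>K. \<Sum>xs\<in>lsts K n. prod_list (map f (x#xs)))"
    by (simp add: sum_product)
  also have "\<dots> = (\<Sum>xs\<in>lsts K (Suc n). prod_list (map f xs))"
    by (rule lists_Suc_sum[OF fK, symmetric])
  finally show ?case .
qed

lemma sum_lists4:
  fixes G :: "'b list \<Rightarrow> real"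
  assumes fK: "finite K"
  shows "(\<Sum>xs\<in>lsts K 4. G xs) = (\<Sum>a\<in>K. \<Sum>b\<in>K. \<Sum>c\<in>K. \<Sum>d\<in>K. G [a,b,c,d])"
proof -
  have e4: "(4::nat) = Suc (Suc (Suc (Suc 0)))" by simp
  show ?thesis unfolding e4 lists_Suc_sum[OF fK] lists_0 by simp
qed

lemma prod_list_sort: "prod_list (map (f :: 'b::linorder \<Rightarrow> real) (sort xs)) = prod_list (map f xs)"
proof -
  have "prod_list (map f (sort xs)) = prod_mset (mset (map f (sort xs)))" by (rule prod_mset_prod_list[symmetric])
  also have "\<dots> = prod_mset (image_mset f (mset (sort xs)))" by simp
  also have "\<dots> = prod_mset (image_mset f (mset xs))" by simp
  also have "\<dots> = prod_mset (mset (map f xs))" by simp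
  also have "\<dots> = prod_list (map f xs)" by (rule prod_mset_prod_list)
  finally show ?thesis .
qed

lemma sort_sum:
  fixes G :: "'b::linorder list \<Rightarrow> real"
  assumes fK: "finite K" and G0: "\<And>xs. xs \<in> lsts K 4 \<Longrightarrow> 0 \<le> G xs"
  shows "(\<Sum>xs\<in>lsts K 4. G (sort xs)) \<le> 256 * (\<Sum>xs\<in>lsts K 4. if sorted xs then G xs else 0)"
proof -
  let ?S = "lsts K 4" and ?T = "{ys \<in> lsts K 4. sorted ys}"
  have fS: "finite ?S" using finite_lists_length_eq[OF fK] by simp
  have fT: "finite ?T" using fS by (rule finite_subset[rotated]) auto
  have im: "sort ` ?S \<subseteq> ?T" by auto
  have "(\<Sum>xs\<in>?S. G (sort xs)) = (\<Sum>y\<in>?T. \<Sum>xs\<in>{x. x \<in> ?S \<and> sort x = y}. G (sort xs))"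
    by (rule sum.group[OF fS fT im, symmetric])
  also have "\<dots> = (\<Sum>y\<in>?T. card {x. x \<in> ?S \<and> sort x = y} * G y)"
    by (rule sum.cong) auto
  also have "\<dots> \<le> (\<Sum>y\<in>?T. 256 * G y)"
  proof (rule sum_mono)
    fix y assume y: "y \<in> ?T"
    have sub: "{x. x \<in> ?S \<and> sort x = y} \<subseteq> lsts (set y) 4" by auto
    have "card {x. x \<in> ?S \<and> sort x = y} \<le> card (lsts (set y) 4)"
      by (rule card_mono[OF _ sub]) (simp add: finite_lists_length_eq)
    also have "\<dots> = card (set y) ^ 4" by (simp add: card_lists_length_eq)
    also have "\<dots> \<le> 4 ^ 4" using card_length[of y] y by (intro power_mono) auto
    finally have "real (card {x. x \<in> ?S \<and> sort x = y}) \<le> 256" by simp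
    then show "real (card {x. x \<in> ?S \<and> sort x = y}) * G y \<le> 256 * G y"
      using G0 y by (intro mult_right_mono) auto
  qed
  also have "\<dots> = 256 * (\<Sum>y\<in>?T. G y)" by (simp add: sum_distrib_left)
  also have "(\<Sum>y\<in>?T. G y) = (\<Sum>xs\<in>?S. if sorted xs then G xs else 0)"
    by (rule sum.inter_filter[OF fS])
  finally show ?thesis .
qed

lemma geo_sum:
  fixes \<rho> :: real
  assumes r: "0 \<le> \<rho>" "\<rho> < 1" and fK: "finite K"
  shows "(\<Sum>b\<in>K. if a \<le> b then \<rho> ^ (b - a) else 0) \<le> 1 / (1 - \<rho>)"
proof -
  let ?K = "{b \<in> K. a \<le> b}"
  have "(\<Sum>b\<in>K. if a \<le> b then \<rho> ^ (b - a) else 0) = (\<Sum>b\<in>?K. \<rho> ^ (b - a))"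
    by (rule sum.inter_filter[OF fK, symmetric])
  also have "\<dots> = (\<Sum>i\<in>(\<lambda>b. b - a) ` ?K. \<rho> ^ i)"
    by (subst sum.reindex) (auto simp: inj_on_def)
  also have "\<dots> \<le> (\<Sum>i. \<rho> ^ i)"
    by (rule sum_le_suminf) (use r fK in \<open>auto intro: summable_geometric\<close>)
  also have "\<dots> = 1 / (1 - \<rho>)" using suminf_geometric[of \<rho>] r by simp
  finally show ?thesis .
qed


definition phi :: "real \<Rightarrow> nat \<Rightarrow> nat \<Rightarrow> real" where
  "phi \<rho> a b = (if a \<le> b then \<rho> ^ (b - a) else 0)"

lemma phi_nonneg: "0 \<le> \<rho> \<Longrightarrow> 0 \<le> phi \<rho> a b" unfolding phi_def by simp

lemma sum4_bound1:
  assumes r: "0 \<le> \<rho>" "\<rho> < 1" and fK: "finite K"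
  shows "(\<Sum>a\<in>K. \<Sum>b\<in>K. \<Sum>c\<in>K. \<Sum>d\<in>K. phi \<rho> a b * phi \<rho> b c) \<le> real (card K) ^ 2 * (1 / (1 - \<rho>)) ^ 2"
proof -
  let ?S = "1 / (1 - \<rho>)" and ?T = "real (card K)"
  have S0: "0 \<le> ?S" using r by simp
  have g: "(\<Sum>b\<in>K. phi \<rho> a b) \<le> ?S" for a using geo_sum[OF r fK, of a] unfolding phi_def .
  have h1: "(\<Sum>c\<in>K. \<Sum>d\<in>K. phi \<rho> a b * phi \<rho> b c) \<le> ?T * ?S * phi \<rho> a b" for a b
  proof -
    have "(\<Sum>c\<in>K. \<Sum>d\<in>K. phi \<rho> a b * phi \<rho> b c) = ?T * phi \<rho> a b * (\<Sum>c\<in>K. phi \<rho> b c)"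
      by (simp add: sum_distrib_left mult_ac)
    also have "\<dots> \<le> ?T * phi \<rho> a b * ?S"
      using g[of b] phi_nonneg[OF r(1)] by (intro mult_left_mono) auto
    finally show ?thesis by (simp add: mult_ac)
  qed
  have h2: "(\<Sum>b\<in>K. \<Sum>c\<in>K. \<Sum>d\<in>K. phi \<rho> a b * phi \<rho> b c) \<le> ?T * ?S * ?S" for a
  proof -
    have "(\<Sum>b\<in>K. \<Sum>c\<in>K. \<Sum>d\<in>K. phi \<rho> a b * phi \<rho> b c) \<le> (\<Sum>b\<in>K. ?T * ?S * phi \<rho> a b)"
      by (rule sum_mono) (rule h1)
    also have "\<dots> = ?T * ?S * (\<Sum>b\<in>K. phi \<rho> a b)" by (simp add: sum_distrib_left)
    also have "\<dots> \<le> ?T * ?S * ?S" using g[of a] S0 by (intro mult_left_mono) auto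
    finally show ?thesis .
  qed
  have "(\<Sum>a\<in>K. \<Sum>b\<in>K. \<Sum>c\<in>K. \<Sum>d\<in>K. phi \<rho> a b * phi \<rho> b c) \<le> (\<Sum>a\<in>K. ?T * ?S * ?S)"
    by (rule sum_mono) (rule h2)
  also have "\<dots> = ?T ^ 2 * ?S ^ 2" by (simp add: power2_eq_square)
  finally show ?thesis .
qed

lemma sum4_bound2:
  assumes r: "0 \<le> \<rho>" "\<rho> < 1" and fK: "finite K"
  shows "(\<Sum>a\<in>K. \<Sum>b\<in>K. \<Sum>c\<in>K. \<Sum>d\<in>K. phi \<rho> a b * phi \<rho> c d) \<le> real (card K) ^ 2 * (1 / (1 - \<rho>)) ^ 2"
proof -
  let ?S = "1 / (1 - \<rho>)" and ?T = "real (card K)"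
  have S0: "0 \<le> ?S" using r by simp
  have g: "(\<Sum>b\<in>K. phi \<rho> a b) \<le> ?S" for a using geo_sum[OF r fK, of a] unfolding phi_def .
  have h1: "(\<Sum>c\<in>K. \<Sum>d\<in>K. phi \<rho> a b * phi \<rho> c d) \<le> ?T * ?S * phi \<rho> a b" for a b
  proof -
    have "(\<Sum>c\<in>K. \<Sum>d\<in>K. phi \<rho> a b * phi \<rho> c d) = phi \<rho> a b * (\<Sum>c\<in>K. \<Sum>d\<in>K. phi \<rho> c d)"
      by (simp add: sum_distrib_left)
    also have "(\<Sum>c\<in>K. \<Sum>d\<in>K. phi \<rho> c d) \<le> (\<Sum>c\<in>K. ?S)" by (rule sum_mono) (rule g)
    then have "phi \<rho> a b * (\<Sum>c\<in>K. \<Sum>d\<in>K. phi \<rho> c d) \<le> phi \<rho> a b * (\<Sum>c\<in>K. ?S)"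
      using phi_nonneg[OF r(1)] by (intro mult_left_mono) auto
    finally show ?thesis by (simp add: mult_ac)
  qed
  have h2: "(\<Sum>b\<in>K. \<Sum>c\<in>K. \<Sum>d\<in>K. phi \<rho> a b * phi \<rho> c d) \<le> ?T * ?S * ?S" for a
  proof -
    have "(\<Sum>b\<in>K. \<Sum>c\<in>K. \<Sum>d\<in>K. phi \<rho> a b * phi \<rho> c d) \<le> (\<Sum>b\<in>K. ?T * ?S * phi \<rho> a b)"
      by (rule sum_mono) (rule h1)
    also have "\<dots> = ?T * ?S * (\<Sum>b\<in>K. phi \<rho> a b)" by (simp add: sum_distrib_left)
    also have "\<dots> \<le> ?T * ?S * ?S" using g[of a] S0 by (intro mult_left_mono) auto
    finally show ?thesis .
  qed
  have "(\<Sum>a\<in>K. \<Sum>b\<in>K. \<Sum>c\<in>K. \<Sum>d\<in>K. phi \<rho> a b * phi \<rho> c d) \<le> (\<Sum>a\<in>K. ?T * ?S * ?S)"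
    by (rule sum_mono) (rule h2)
  also have "\<dots> = ?T ^ 2 * ?S ^ 2" by (simp add: power2_eq_square)
  finally show ?thesis .
qed

context setting begin

definition rho :: real where "rho = exp (- \<kappa> / 6)"
definition K2 :: real where "K2 = K1 * (1 + BB ^ 2)"
definition K3 :: real where "K3 = K2 * (exp \<kappa> / \<kappa>)"
definition K4 :: real where "K4 = 512 * K3 * (1 / (1 - rho)) ^ 2"

lemma rho: "0 \<le> rho" "rho < 1" unfolding rho_def using kpos by auto

lemma eps_rho: "eps (d div 3) \<le> (exp \<kappa> / \<kappa>) * rho ^ (2 * d)"
proof -
  have h: "real d \<le> 3 * real (d div 3) + 2" by linarith
  have A: "\<kappa> * real d \<le> 3 * (\<kappa> * real (d div 3)) + 2 * \<kappa>"
    using mult_left_mono[OF h, of \<kappa>] kpos by (simp add: algebra_simps)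
  have le: "- \<kappa> * real (d div 3) \<le> \<kappa> + (- (\<kappa> * real d) / 3)"
    using A kpos by linarith
  have "rho ^ (2 * d) = exp (real (2 * d) * (- \<kappa> / 6))" unfolding rho_def by (rule exp_of_nat_mult[symmetric])
  also have "real (2 * d) * (- \<kappa> / 6) = - (\<kappa> * real d) / 3" by simp
  finally have r: "rho ^ (2 * d) = exp (- (\<kappa> * real d) / 3)" .
  have "eps (d div 3) = (1 / \<kappa>) * exp (- \<kappa> * real (d div 3))" unfolding eps_def ..
  also have "\<dots> \<le> (1 / \<kappa>) * exp (\<kappa> + (- (\<kappa> * real d) / 3))"
    using le kpos by (intro mult_left_mono) auto
  also have "\<dots> = (exp \<kappa> / \<kappa>) * rho ^ (2 * d)" unfolding r exp_add by simp
  finally show ?thesis .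
qed

lemma min_rho: "min (rho ^ (2 * x)) (rho ^ (2 * y)) \<le> rho ^ (x + y)"
proof (cases "x \<le> y")
  case True
  then have "rho ^ (2 * y) \<le> rho ^ (x + y)" using rho by (intro power_decreasing) auto
  then show ?thesis by simp
next
  case False
  then have "rho ^ (2 * x) \<le> rho ^ (x + y)" using rho by (intro power_decreasing) auto
  then show ?thesis by simp
qed

lemma K_nonneg: "0 \<le> K2" "0 \<le> K3" "0 \<le> K4"
  unfolding K4_def K3_def K2_def using K1_nonneg kpos rho by auto

end

context fourth begin

interpretation prob_space M by (rule P)

lemma tuple_bound:
  assumes k: "k1 \<in> {u..v}" "k2 \<in> {u..v}" "k3 \<in> {u..v}" "k4 \<in> {u..v}" and o: "k1 \<le> k2" "k2 \<le> k3" "k3 \<le> k4"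
  shows "\<bar>expectation (W k1 k2 k3 k4)\<bar> \<le> K3 * (rho ^ ((k2 - k1) + (k3 - k2)) + rho ^ ((k2 - k1) + (k4 - k3)))"
proof -
  define e1 where "e1 = eps ((k2 - k1) div 3)"
  define e2 where "e2 = eps ((k3 - k2) div 3)"
  define e3 where "e3 = eps ((k4 - k3) div 3)"
  define c where "c = exp \<kappa> / \<kappa>"
  have e0: "0 \<le> e1" "0 \<le> e2" "0 \<le> e3" unfolding e1_def e2_def e3_def by (auto intro: eps_nonneg)
  have BB2: "0 \<le> BB ^ 2" by simp
  have K12: "K1 \<le> K2" "BB ^ 2 * K1 \<le> K2" unfolding K2_def using K1_nonneg by (auto simp: algebra_simps)
  have x1: "\<bar>expectation (W k1 k2 k3 k4)\<bar> \<le> K2 * e1"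
    using B1[OF k o] mult_right_mono[OF K12(1) e0(1)] unfolding e1_def by linarith
  have x2: "\<bar>expectation (W k1 k2 k3 k4)\<bar> \<le> K2 * (e2 + e3)"
    using B2[OF k o] mult_right_mono[OF K12(1) e0(2)] mult_right_mono[OF K12(2) e0(3)]
    unfolding e2_def e3_def by (simp add: algebra_simps)
  have K2n: "0 \<le> K2" by (rule K_nonneg)
  have x: "\<bar>expectation (W k1 k2 k3 k4)\<bar> \<le> K2 * (min e1 e2 + min e1 e3)"
  proof (cases "e1 \<le> e2 \<or> e1 \<le> e3")
    case True
    then have "e1 \<le> min e1 e2 + min e1 e3" using e0 by auto
    then show ?thesis using x1 K2n by (smt (verit) mult_left_mono)
  next
    case False
    then have "min e1 e2 + min e1 e3 = e2 + e3" by auto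
    then show ?thesis using x2 by simp
  qed
  have c0: "0 \<le> c" unfolding c_def using kpos by simp
  have m: "min (eps (x div 3)) (eps (y div 3)) \<le> c * rho ^ (x + y)" for x y
  proof -
    have "min (eps (x div 3)) (eps (y div 3)) \<le> min (c * rho ^ (2 * x)) (c * rho ^ (2 * y))"
      using eps_rho[of x] eps_rho[of y] unfolding c_def by linarith
    also have "\<dots> = c * min (rho ^ (2 * x)) (rho ^ (2 * y))" using c0 by (simp add: min_mult_distrib_left)
    also have "\<dots> \<le> c * rho ^ (x + y)" using c0 min_rho by (intro mult_left_mono) auto
    finally show ?thesis .
  qed
  have "min e1 e2 + min e1 e3 \<le> c * rho ^ ((k2 - k1) + (k3 - k2)) + c * rho ^ ((k2 - k1) + (k4 - k3))"
    unfolding e1_def e2_def e3_def by (intro add_mono m)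
  then have "K2 * (min e1 e2 + min e1 e3) \<le> K2 * (c * rho ^ ((k2 - k1) + (k3 - k2)) + c * rho ^ ((k2 - k1) + (k4 - k3)))"
    using K2n by (rule mult_left_mono)
  also have "\<dots> = K3 * (rho ^ ((k2 - k1) + (k3 - k2)) + rho ^ ((k2 - k1) + (k4 - k3)))"
    unfolding K3_def c_def by (simp add: algebra_simps)
  finally show ?thesis using x by linarith
qed

end

context fourth begin
interpretation prob_space M by (rule P)

definition Wl :: "nat list \<Rightarrow> 'a \<Rightarrow> real" where
  "Wl xs \<omega> = prod_list (map (\<lambda>k. PL (Zl k) \<omega>) xs)"

lemma Wl_PL: "Wl xs = PL (concat (map Zl xs))"
  by (induction xs) (auto simp: Wl_def fun_eq_iff)

lemma concat_good: "set xs \<subseteq> {u..v} \<Longrightarrow> good (concat (map Zl xs))"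
  by (induction xs) (auto simp: Zl_good)

lemma Wl_int: "set xs \<subseteq> {u..v} \<Longrightarrow> integrable M (Wl xs)"
  unfolding Wl_PL using concat_good by (intro intb[OF PLm PLb])

lemma Wl_sort: "Wl (sort xs) = Wl xs"
  unfolding Wl_def by (auto simp: fun_eq_iff prod_list_sort)

lemma Wl4: "Wl [x1,x2,x3,x4] = W x1 x2 x3 x4"
  by (auto simp: Wl_def W_def fun_eq_iff mult_ac)

lemma fourth_bound:
  "expectation (\<lambda>\<omega>. (\<Sum>k\<in>{u..v}. PL (Zl k) \<omega>) ^ 4) \<le> K4 * real (card {u..v}) ^ 2"
proof -
  let ?K = "{u..v}"
  let ?A = "lsts ?K 4"
  have fK: "finite ?K" by simp
  have fA: "finite ?A" by (rule finite_lists_length_eq[OF fK])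
  define g where "g ys = \<bar>expectation (Wl ys)\<bar>" for ys
  have "expectation (\<lambda>\<omega>. (\<Sum>k\<in>?K. PL (Zl k) \<omega>) ^ 4) = expectation (\<lambda>\<omega>. \<Sum>xs\<in>?A. Wl xs \<omega>)"
    unfolding Wl_def by (simp only: power_sum_lists[OF fK])
  also have "\<dots> = (\<Sum>xs\<in>?A. expectation (Wl xs))"
    by (rule Bochner_Integration.integral_sum) (auto intro: Wl_int)
  also have "\<dots> \<le> (\<Sum>xs\<in>?A. g (sort xs))"
    unfolding g_def Wl_sort by (rule sum_mono) simp
  also have "\<dots> \<le> 256 * (\<Sum>xs\<in>?A. if sorted xs then g xs else 0)"
    by (rule sort_sum[OF fK]) (simp add: g_def)
  also have "(\<Sum>xs\<in>?A. if sorted xs then g xs else 0)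
      = (\<Sum>y1\<in>?K. \<Sum>y2\<in>?K. \<Sum>y3\<in>?K. \<Sum>y4\<in>?K. if sorted [y1,y2,y3,y4] then g [y1,y2,y3,y4] else 0)"
    by (rule sum_lists4[OF fK])
  also have "\<dots> \<le> (\<Sum>y1\<in>?K. \<Sum>y2\<in>?K. \<Sum>y3\<in>?K. \<Sum>y4\<in>?K. K3 * (phi rho y1 y2 * phi rho y2 y3) + K3 * (phi rho y1 y2 * phi rho y3 y4))"
  proof (intro sum_mono)
    fix y1 y2 y3 y4 assume k: "y1 \<in> ?K" "y2 \<in> ?K" "y3 \<in> ?K" "y4 \<in> ?K"
    have p0: "0 \<le> phi rho x y" for x y by (rule phi_nonneg[OF rho(1)])
    show "(if sorted [y1,y2,y3,y4] then g [y1,y2,y3,y4] else 0) \<le> K3 * (phi rho y1 y2 * phi rho y2 y3) + K3 * (phi rho y1 y2 * phi rho y3 y4)"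
    proof (cases "y1 \<le> y2 \<and> y2 \<le> y3 \<and> y3 \<le> y4")
      case True
      then have o: "y1 \<le> y2" "y2 \<le> y3" "y3 \<le> y4" by auto
      have "g [y1,y2,y3,y4] \<le> K3 * (rho ^ ((y2 - y1) + (y3 - y2)) + rho ^ ((y2 - y1) + (y4 - y3)))"
        unfolding g_def Wl4 by (rule tuple_bound[OF k o])
      also have "\<dots> = K3 * (phi rho y1 y2 * phi rho y2 y3) + K3 * (phi rho y1 y2 * phi rho y3 y4)"
        using o by (simp add: phi_def distrib_left flip: power_add)
      finally show ?thesis using True by simp
    next
      case False
      then have ns: "\<not> sorted [y1,y2,y3,y4]" by auto
      have "0 \<le> K3 * (phi rho y1 y2 * phi rho y2 y3) + K3 * (phi rho y1 y2 * phi rho y3 y4)"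
        using p0 K_nonneg by simp
      then show ?thesis using ns by (simp only: if_False)
    qed
  qed
  also have "\<dots> = K3 * (\<Sum>y1\<in>?K. \<Sum>y2\<in>?K. \<Sum>y3\<in>?K. \<Sum>y4\<in>?K. phi rho y1 y2 * phi rho y2 y3)
      + K3 * (\<Sum>y1\<in>?K. \<Sum>y2\<in>?K. \<Sum>y3\<in>?K. \<Sum>y4\<in>?K. phi rho y1 y2 * phi rho y3 y4)"
    by (simp add: sum.distrib sum_distrib_left mult_ac)
  also have "\<dots> \<le> K3 * (real (card ?K) ^ 2 * (1 / (1 - rho)) ^ 2) + K3 * (real (card ?K) ^ 2 * (1 / (1 - rho)) ^ 2)"
    using K_nonneg sum4_bound1[OF rho fK] sum4_bound2[OF rho fK] by (intro add_mono mult_left_mono) auto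
  finally have "expectation (\<lambda>\<omega>. (\<Sum>k\<in>?K. PL (Zl k) \<omega>) ^ 4)
      \<le> 256 * (K3 * (real (card ?K) ^ 2 * (1 / (1 - rho)) ^ 2) + K3 * (real (card ?K) ^ 2 * (1 / (1 - rho)) ^ 2))"
    by simp
  also have "\<dots> = K4 * real (card ?K) ^ 2" unfolding K4_def by (simp add: algebra_simps)
  finally show ?thesis .
qed

end

lemma telesc:
  fixes x y :: "nat \<Rightarrow> real"
  shows "(\<Prod>j\<in>{1..n}. x j) - (\<Prod>j\<in>{1..n}. y j)
    = (\<Sum>i\<in>{1..n}. (\<Prod>j\<in>{1..<i}. y j) * (x i - y i) * (\<Prod>j\<in>{Suc i..n}. x j))"
proof (induction n)
  case 0
  then show ?case by simp
next
  case (Suc n)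
  have p1: "(\<Prod>j\<in>{1..Suc n}. x j) = (\<Prod>j\<in>{1..n}. x j) * x (Suc n)"
    by (simp add: prod.atLeast1_atMost_eq prod.nat_ivl_Suc' mult.commute)
  have p2: "(\<Prod>j\<in>{1..Suc n}. y j) = (\<Prod>j\<in>{1..n}. y j) * y (Suc n)"
    by (simp add: prod.atLeast1_atMost_eq prod.nat_ivl_Suc' mult.commute)
  have p3: "(\<Prod>j\<in>{Suc i..Suc n}. x j) = (\<Prod>j\<in>{Suc i..n}. x j) * x (Suc n)" if "i \<in> {1..n}" for i
  proof -
    have "{Suc i..Suc n} = insert (Suc n) {Suc i..n}" using that by auto
    then show ?thesis by (simp add: mult.commute)
  qed
  have "(\<Sum>i\<in>{1..Suc n}. (\<Prod>j\<in>{1..<i}. y j) * (x i - y i) * (\<Prod>j\<in>{Suc i..Suc n}. x j))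
      = (\<Sum>i\<in>{1..n}. (\<Prod>j\<in>{1..<i}. y j) * (x i - y i) * (\<Prod>j\<in>{Suc i..Suc n}. x j))
        + (\<Prod>j\<in>{1..<Suc n}. y j) * (x (Suc n) - y (Suc n))"
    by (simp add: sum.atLeast1_atMost_eq sum.nat_ivl_Suc')
  also have "(\<Sum>i\<in>{1..n}. (\<Prod>j\<in>{1..<i}. y j) * (x i - y i) * (\<Prod>j\<in>{Suc i..Suc n}. x j))
      = (\<Sum>i\<in>{1..n}. (\<Prod>j\<in>{1..<i}. y j) * (x i - y i) * (\<Prod>j\<in>{Suc i..n}. x j)) * x (Suc n)"
    unfolding sum_distrib_right by (rule sum.cong[OF refl]) (simp add: p3 mult.assoc)
  also have "{1..<Suc n} = {1..n}" by auto
  finally show ?case unfolding p1 p2 Suc[symmetric] by (simp add: algebra_simps)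
qed

lemma pow4_sum:
  fixes f :: "nat \<Rightarrow> real"
  shows "(\<Sum>i\<in>I. f i) ^ 4 \<le> real (card I) ^ 3 * (\<Sum>i\<in>I. f i ^ 4)"
proof -
  have a: "(\<Sum>i\<in>I. f i)\<^sup>2 \<le> (\<Sum>i\<in>I. (f i)\<^sup>2) * card I" by (rule sum_squared_le_sum_of_squares)
  have b: "(\<Sum>i\<in>I. (f i)\<^sup>2)\<^sup>2 \<le> (\<Sum>i\<in>I. ((f i)\<^sup>2)\<^sup>2) * card I" by (rule sum_squared_le_sum_of_squares)
  have "(\<Sum>i\<in>I. f i) ^ 4 = ((\<Sum>i\<in>I. f i)\<^sup>2)\<^sup>2" by simp
  also have "\<dots> \<le> ((\<Sum>i\<in>I. (f i)\<^sup>2) * card I)\<^sup>2"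
    using a by (intro power_mono) auto
  also have "\<dots> = (\<Sum>i\<in>I. (f i)\<^sup>2)\<^sup>2 * (real (card I))\<^sup>2" by (simp add: power_mult_distrib)
  also have "\<dots> \<le> (\<Sum>i\<in>I. ((f i)\<^sup>2)\<^sup>2) * card I * (real (card I))\<^sup>2"
    using b by (intro mult_right_mono) auto
  also have "\<dots> = real (card I) ^ 3 * (\<Sum>i\<in>I. f i ^ 4)"
  proof -
    have e: "(\<lambda>i. ((f i)\<^sup>2)\<^sup>2) = (\<lambda>i. f i ^ 4)" by (simp add: fun_eq_iff flip: power_mult)
    show ?thesis unfolding e by (simp add: power2_eq_square power3_eq_cube mult_ac)
  qed
  finally show ?thesis .
qed

context setting begin
interpretation prob_space M by (rule P)

lemma main_bound:
  fixes q :: "nat \<Rightarrow> nat \<Rightarrow> nat" and u v :: nat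
  assumes qmono: "\<And>j x y. j \<in> {1..L} \<Longrightarrow> u \<le> x \<Longrightarrow> x \<le> y \<Longrightarrow> y \<le> v \<Longrightarrow> q j x + (y - x) \<le> q j y"
    and qhigh: "\<And>i j k k'. i \<in> {1..L} \<Longrightarrow> j \<in> {Suc i..L} \<Longrightarrow> k \<in> {u..v} \<Longrightarrow> k' \<in> {u..v} \<Longrightarrow> q i k \<le> q j k'"
  shows "expectation (\<lambda>\<omega>. (\<Sum>k\<in>{u..v}. (\<Prod>j\<in>{1..L}. X j (q j k) \<omega>) - (\<Prod>j\<in>{1..L}. expectation (X j 0))) ^ 4)
    \<le> real L ^ 4 * Dp ^ (4 * L) * K4 * real (card {u..v}) ^ 2"
proof -
  define hs where "hs i k = map (\<lambda>j. (j, q j k, 0::real)) [Suc i..<Suc L]" for i k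
  define Si where "Si i \<omega> = (\<Sum>k\<in>{u..v}. (X i (q i k) \<omega> - a i) * (\<Prod>j\<in>{Suc i..L}. X j (q j k) \<omega>))" for i \<omega>
  define c where "c i = (\<Prod>j\<in>{1..<i}. a j)" for i
  define T where "T = real (card {u..v})"
  have Sprops: "integrable M (\<lambda>\<omega>. Si i \<omega> ^ 4) \<and> expectation (\<lambda>\<omega>. Si i \<omega> ^ 4) \<le> K4 * T ^ 2"
    if i: "i \<in> {1..L}" for i
  proof -
    have ax: "fourth M L X D F \<kappa> i (q i) (hs i) u v"
    proof (intro fourth.intro setting_axioms fourth_axioms.intro)
      show "i \<in> {1..L}" by (rule i)
      show "good (hs i k)" for k
        unfolding hs_def good_def list_all_iff using i D_nonneg by auto
      show "length (hs i k) \<le> L" for k unfolding hs_def using i by auto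
      show "q i k + (k' - k) \<le> q i k'" if "k \<in> {u..v}" "k' \<in> {u..v}" "k \<le> k'" for k k'
        using qmono[OF i] that by auto
      show "list_all (\<lambda>(j, t, c). q i k \<le> t) (hs i k')" if "k \<in> {u..v}" "k' \<in> {u..v}" for k k'
        unfolding hs_def list_all_iff using qhigh[OF i _ that] by auto
    qed
    interpret Q: fourth M L X D F \<kappa> i "q i" "hs i" u v by (rule ax)
    have eq: "PL (Q.Zl k) \<omega> = (X i (q i k) \<omega> - a i) * (\<Prod>j\<in>{Suc i..L}. X j (q j k) \<omega>)" for k \<omega>
    proof -
      have "prod_list (map (\<lambda>f. vF f \<omega>) (hs i k)) = prod_list (map (\<lambda>j. X j (q j k) \<omega>) [Suc i..<Suc L])"
        unfolding hs_def by (simp add: o_def)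
      also have "\<dots> = (\<Prod>j\<in>set [Suc i..<Suc L]. X j (q j k) \<omega>)"
        by (rule prod.distinct_set_conv_list[symmetric]) simp
      also have "set [Suc i..<Suc L] = {Suc i..L}" by auto
      finally show ?thesis unfolding Q.Zl_def Q.fk_def PL_def by simp
    qed
    have Seq: "Si i = (\<lambda>\<omega>. \<Sum>k\<in>{u..v}. PL (Q.Zl k) \<omega>)" unfolding Si_def eq by simp
    have int: "integrable M (\<lambda>\<omega>. Si i \<omega> ^ 4)"
    proof -
      have e: "(\<lambda>\<omega>. Si i \<omega> ^ 4) = (\<lambda>\<omega>. \<Sum>xs\<in>lsts {u..v} 4. Q.Wl xs \<omega>)"
        unfolding Seq Q.Wl_def by (simp add: power_sum_lists)
      show ?thesis unfolding e by (rule Bochner_Integration.integrable_sum) (auto intro: Q.Wl_int)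
    qed
    show ?thesis using int Q.fourth_bound unfolding Seq T_def by simp
  qed
  have tel: "(\<Sum>k\<in>{u..v}. (\<Prod>j\<in>{1..L}. X j (q j k) \<omega>) - (\<Prod>j\<in>{1..L}. expectation (X j 0)))
      = (\<Sum>i\<in>{1..L}. c i * Si i \<omega>)" for \<omega>
  proof -
    have "(\<Sum>k\<in>{u..v}. (\<Prod>j\<in>{1..L}. X j (q j k) \<omega>) - (\<Prod>j\<in>{1..L}. expectation (X j 0)))
      = (\<Sum>k\<in>{u..v}. \<Sum>i\<in>{1..L}. c i * ((X i (q i k) \<omega> - a i) * (\<Prod>j\<in>{Suc i..L}. X j (q j k) \<omega>)))"
      unfolding a_def[symmetric] telesc c_def by (simp add: mult_ac)
    also have "\<dots> = (\<Sum>i\<in>{1..L}. c i * Si i \<omega>)"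
      unfolding Si_def sum_distrib_left by (rule sum.swap)
    finally show ?thesis .
  qed
  have cb: "c i ^ 4 \<le> Dp ^ (4 * L)" if i: "i \<in> {1..L}" for i
  proof -
    have Dp1: "1 \<le> Dp" unfolding Dp_def by simp
    have "\<bar>c i\<bar> = (\<Prod>j\<in>{1..<i}. \<bar>a j\<bar>)" unfolding c_def by (simp add: abs_prod)
    also have "\<dots> \<le> (\<Prod>j\<in>{1..<i}. Dp)"
    proof (rule prod_mono)
      fix j assume "j \<in> {1..<i}"
      then have "j \<in> {1..L}" using i by auto
      then show "0 \<le> \<bar>a j\<bar> \<and> \<bar>a j\<bar> \<le> Dp" using a_bound Dp_ge by fastforce
    qed
    also have "\<dots> = Dp ^ (i - 1)" by simp
    also have "\<dots> \<le> Dp ^ L" using Dp1 i by (intro power_increasing) auto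
    finally have "\<bar>c i\<bar> ^ 4 \<le> (Dp ^ L) ^ 4" by (intro power_mono) auto
    then show ?thesis by (simp add: power_even_abs_numeral mult.commute flip: power_mult)
  qed
  have intR: "integrable M (\<lambda>\<omega>. real L ^ 3 * (\<Sum>i\<in>{1..L}. c i ^ 4 * Si i \<omega> ^ 4))"
    using Sprops by (intro integrable_mult_right Bochner_Integration.integrable_sum) auto
  have "expectation (\<lambda>\<omega>. (\<Sum>k\<in>{u..v}. (\<Prod>j\<in>{1..L}. X j (q j k) \<omega>) - (\<Prod>j\<in>{1..L}. expectation (X j 0))) ^ 4)
      = expectation (\<lambda>\<omega>. (\<Sum>i\<in>{1..L}. c i * Si i \<omega>) ^ 4)" unfolding tel ..
  also have "\<dots> \<le> expectation (\<lambda>\<omega>. real L ^ 3 * (\<Sum>i\<in>{1..L}. c i ^ 4 * Si i \<omega> ^ 4))"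
  proof (rule integral_mono_AE'[OF intR])
    show "AE \<omega> in M. (\<Sum>i\<in>{1..L}. c i * Si i \<omega>) ^ 4 \<le> real L ^ 3 * (\<Sum>i\<in>{1..L}. c i ^ 4 * Si i \<omega> ^ 4)"
      using pow4_sum[of "\<lambda>i. c i * Si i _" "{1..L}"] by (simp add: power_mult_distrib)
    show "AE \<omega> in M. 0 \<le> real L ^ 3 * (\<Sum>i\<in>{1..L}. c i ^ 4 * Si i \<omega> ^ 4)"
      by (intro AE_I2 mult_nonneg_nonneg sum_nonneg) (auto simp: zero_le_even_power)
  qed
  also have "\<dots> = real L ^ 3 * (\<Sum>i\<in>{1..L}. c i ^ 4 * expectation (\<lambda>\<omega>. Si i \<omega> ^ 4))"
    using Sprops by (subst integral_mult_right_zero, subst Bochner_Integration.integral_sum) auto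
  also have "\<dots> \<le> real L ^ 3 * (\<Sum>i\<in>{1..L}. Dp ^ (4 * L) * (K4 * T ^ 2))"
  proof (intro mult_left_mono sum_mono)
    fix i assume i: "i \<in> {1..L}"
    show "c i ^ 4 * expectation (\<lambda>\<omega>. Si i \<omega> ^ 4) \<le> Dp ^ (4 * L) * (K4 * T ^ 2)"
    proof (rule mult_mono)
      show "c i ^ 4 \<le> Dp ^ (4 * L)" by (rule cb[OF i])
      show "expectation (\<lambda>\<omega>. Si i \<omega> ^ 4) \<le> K4 * T ^ 2" using Sprops[OF i] by blast
      show "0 \<le> Dp ^ (4 * L)" unfolding Dp_def by simp
      show "0 \<le> expectation (\<lambda>\<omega>. Si i \<omega> ^ 4)" by (rule integral_nonneg_AE) (auto simp: zero_le_even_power)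
    qed
  qed simp
  also have "\<dots> = real L ^ 4 * Dp ^ (4 * L) * K4 * real (card {u..v}) ^ 2"
    unfolding T_def by (simp add: power_Suc power_numeral_reduce algebra_simps)
  finally show ?thesis .
qed

end


theorem lemma3p8:
  fixes M :: "'a measure" and L :: nat and X :: "nat \<Rightarrow> nat \<Rightarrow> 'a \<Rightarrow> real" and D :: real
    and F :: "ereal \<Rightarrow> ereal \<Rightarrow> 'a measure" and q :: "nat \<Rightarrow> nat \<Rightarrow> nat"
    and r p :: nat and \<gamma> n\<^sub>0 :: real
  assumes P: "prob_space M"
    and l: "L \<ge> 1"
    and stat: "\<And>j. j \<in> {1..L} \<Longrightarrow> stationary_proc M (X j)"
    and bdd: "\<And>j n. j \<in> {1..L} \<Longrightarrow> AE \<omega> in M. \<bar>X j n \<omega>\<bar> \<le> D"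
    and subalg: "\<And>k l. k \<in> ext_int_idx \<Longrightarrow> l \<in> ext_int_idx \<Longrightarrow> k \<le> l \<Longrightarrow> subalgebra M (F k l)"
    and mono: "\<And>k l k' l'. k \<in> ext_int_idx \<Longrightarrow> l \<in> ext_int_idx \<Longrightarrow> k' \<in> ext_int_idx \<Longrightarrow> l' \<in> ext_int_idx
        \<Longrightarrow> k \<le> l \<Longrightarrow> k' \<le> k \<Longrightarrow> l \<le> l' \<Longrightarrow> sets (F k l) \<subseteq> sets (F k' l')"
    and C1: "\<exists>\<kappa>>0. \<forall>n. alpha_mix M F n + (MAX j\<in>{1..L}. beta_approx M F (X j) n)
                \<le> (1 / \<kappa>) * exp (- \<kappa> * real n)"
    and C2: "r > 0" "\<And>n. q 1 n = r * n + p"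
    and gam: "0 < \<gamma>" "\<gamma> < 1" and n0: "n\<^sub>0 > 1"
    and C3: "\<And>j n. j \<in> {2..L} \<Longrightarrow> real n \<ge> n\<^sub>0 \<Longrightarrow> real (q j (n + 1)) \<ge> real (q j n) + real n powr \<gamma>"
    and C4: "\<And>j n. j \<in> {1..<L} \<Longrightarrow> real n \<ge> n\<^sub>0 \<Longrightarrow>
               real (q (j + 1) (nat \<lfloor>real n powr (1 - \<gamma>)\<rfloor>)) \<ge> real (q j n) * real n powr \<gamma>"
  shows "\<exists>C>0. \<forall>N n m::nat. N \<ge> n \<and> n > m \<and> real_of_int \<lfloor>real N powr (1 - \<gamma>)\<rfloor> \<le> real m
            \<and> real_of_int \<lfloor>real N powr (1 - \<gamma>)\<rfloor> \<ge> n\<^sub>0 \<longrightarrow>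
           prob_space.expectation M (\<lambda>\<omega>. (\<Sum>k\<in>{m+1..n}.
               (\<Prod>j\<in>{1..L}. X j (q j k) \<omega>) - (\<Prod>j\<in>{1..L}. prob_space.expectation M (X j 0))) ^ 4)
             \<le> C * (real n - real m) ^ 2"
proof -
  obtain \<kappa> where kp: "\<kappa> > 0" and C1': "\<And>n. alpha_mix M F n + (MAX j\<in>{1..L}. beta_approx M F (X j) n)
                \<le> (1 / \<kappa>) * exp (- \<kappa> * real n)" using C1 by blast
  interpret S: setting M L X D F \<kappa>
    by (rule setting.intro) (use P l stat bdd subalg mono kp C1' in auto)
  have qstep: "q j y + 1 \<le> q j (Suc y)" if j: "j \<in> {1..L}" and y: "n\<^sub>0 \<le> real y" for j y
  proof (cases "j = 1")
    case True
    then show ?thesis using C2 by simp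
  next
    case False
    then have j2: "j \<in> {2..L}" using j by auto
    have "1 \<le> real y" using y n0 by simp
    then have "1 \<le> real y powr \<gamma>" using gam by (intro ge_one_powr_ge_zero) auto
    then have "real (q j y) + 1 \<le> real (q j (y + 1))" using C3[OF j2 y] by linarith
    then show ?thesis by simp
  qed
  have qmono: "q j x + (y - x) \<le> q j y" if j: "j \<in> {1..L}" and x: "n\<^sub>0 \<le> real x" and xy: "x \<le> y" for j x y
    using xy
  proof (induction y rule: dec_induct)
    case base
    then show ?case by simp
  next
    case (step y)
    have "n\<^sub>0 \<le> real y" using x step.hyps(1) by linarith
    then have "q j y + 1 \<le> q j (Suc y)" by (rule qstep[OF j])
    then show ?case using step.IH step.hyps(1) by linarith
  qed
  define C where "C = real L ^ 4 * S.Dp ^ (4 * L) * S.K4 + 1"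
  have "0 \<le> real L ^ 4 * S.Dp ^ (4 * L) * S.K4"
    using S.K_nonneg(3) by (intro mult_nonneg_nonneg) (auto simp: S.Dp_def)
  then have Cpos: "C > 0" unfolding C_def by linarith
  show ?thesis
  proof (intro exI[of _ C] conjI allI impI Cpos)
    fix N n m :: nat
    assume h: "N \<ge> n \<and> n > m \<and> real_of_int \<lfloor>real N powr (1 - \<gamma>)\<rfloor> \<le> real m
            \<and> real_of_int \<lfloor>real N powr (1 - \<gamma>)\<rfloor> \<ge> n\<^sub>0"
    define fl where "fl = nat \<lfloor>real N powr (1 - \<gamma>)\<rfloor>"
    have fl0: "real_of_int \<lfloor>real N powr (1 - \<gamma>)\<rfloor> \<ge> 0" using h n0 by linarith
    have rfl: "real fl = real_of_int \<lfloor>real N powr (1 - \<gamma>)\<rfloor>" unfolding fl_def using fl0 by simp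
    have fln0: "n\<^sub>0 \<le> real fl" using rfl h by simp
    have flm: "fl \<le> m" using rfl h by simp
    have N1: "1 \<le> real N" using h by simp
    have "real N powr (1 - \<gamma>) \<le> real N powr 1" using gam N1 by (intro powr_mono) auto
    moreover have "real N powr 1 = real N" using N1 by simp
    ultimately have "real fl \<le> real N" using rfl N1 of_int_floor_le[of "real N powr (1 - \<gamma>)"] by linarith
    then have flN: "fl \<le> N" by simp
    have Nn0: "n\<^sub>0 \<le> real N" using fln0 \<open>real fl \<le> real N\<close> by linarith
    have Ng: "1 \<le> real N powr \<gamma>" using N1 gam by (intro ge_one_powr_ge_zero) auto
    have high: "\<forall>k'. fl \<le> k' \<longrightarrow> q i k \<le> q j k'"
      if i: "i \<in> {1..L}" and k: "fl \<le> k" "k \<le> N" and j: "Suc i \<le> j" "j \<le> L" for i j k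
      using j
    proof (induction j rule: nat_induct_at_least)
      case base
      show ?case
      proof (intro allI impI)
        fix k' assume k': "fl \<le> k'"
        have iL: "i \<in> {1..<L}" using i base by auto
        have "real (q i N) * 1 \<le> real (q i N) * real N powr \<gamma>" using Ng by (intro mult_left_mono) auto
        also have "\<dots> \<le> real (q (i + 1) fl)" using C4[OF iL Nn0] unfolding fl_def by simp
        finally have a1: "q i N \<le> q (Suc i) fl" by simp
        have a2: "q (Suc i) fl \<le> q (Suc i) k'" using qmono[of "Suc i" fl k'] fln0 k' base by auto
        have a3: "q i k \<le> q i N" using qmono[OF i, of k N] fln0 k by auto
        show "q i k \<le> q (Suc i) k'" using a1 a2 a3 by linarith
      qed
    next
      case (Suc j)
      show ?case
      proof (intro allI impI)
        fix k' assume k': "fl \<le> k'"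
        have jL: "j \<in> {1..<L}" using Suc.hyps Suc.prems i by auto
        have "real (q j N) * 1 \<le> real (q j N) * real N powr \<gamma>" using Ng by (intro mult_left_mono) auto
        also have "\<dots> \<le> real (q (j + 1) fl)" using C4[OF jL Nn0] unfolding fl_def by simp
        finally have a1: "q j N \<le> q (Suc j) fl" by simp
        have a2: "q (Suc j) fl \<le> q (Suc j) k'" using qmono[of "Suc j" fl k'] fln0 k' Suc.prems by auto
        have a3: "q i k \<le> q j N" using Suc.IH Suc.prems flN by auto
        show "q i k \<le> q (Suc j) k'" using a1 a2 a3 by linarith
      qed
    qed
    have mb: "prob_space.expectation M (\<lambda>\<omega>. (\<Sum>k\<in>{m+1..n}.
               (\<Prod>j\<in>{1..L}. X j (q j k) \<omega>) - (\<Prod>j\<in>{1..L}. prob_space.expectation M (X j 0))) ^ 4)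
        \<le> real L ^ 4 * S.Dp ^ (4 * L) * S.K4 * real (card {m+1..n}) ^ 2"
    proof (rule S.main_bound)
      show "q j x + (y - x) \<le> q j y" if "j \<in> {1..L}" "m + 1 \<le> x" "x \<le> y" "y \<le> n" for j x y
        using qmono[OF that(1) _ that(3)] fln0 flm that(2) by (smt (verit) of_nat_le_iff le_trans Suc_leD Suc_eq_plus1)
      show "q i k \<le> q j k'" if "i \<in> {1..L}" "j \<in> {Suc i..L}" "k \<in> {m + 1..n}" "k' \<in> {m + 1..n}" for i j k k'
        using high[OF that(1), of k j] that flm h by auto
    qed
    have card: "real (card {m+1..n}) = real n - real m" using h by simp
    have "real L ^ 4 * S.Dp ^ (4 * L) * S.K4 * (real n - real m) ^ 2 \<le> C * (real n - real m) ^ 2"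
      unfolding C_def by (intro mult_right_mono) auto
    then show "prob_space.expectation M (\<lambda>\<omega>. (\<Sum>k\<in>{m+1..n}.
               (\<Prod>j\<in>{1..L}. X j (q j k) \<omega>) - (\<Prod>j\<in>{1..L}. prob_space.expectation M (X j 0))) ^ 4)
             \<le> C * (real n - real m) ^ 2" using mb unfolding card by linarith
  qed
qed


end
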